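(* For any $f\in L^\infty(\mathbb{R}_+)$ and constant $\alpha$, $K(f)=\alpha$ if and only if $f_\omega = \alpha$ (almost everywhere on $\mathbb{R}$) for every $\omega\in\mathscr{O}$.
   Context: $\mathbb{R}_+=[0,\infty)$; functions are complex-valued. $K(f)=\alpha$ means that $f(\cdot+s)$ converges, as $s\to\infty$, to the constant $\alpha$ in the weak* topology of $L^\infty(\mathbb{R}_+)=L^1(\mathbb{R}_+)^*$. Let $\beta\mathbb{N}$ be the Stone–Čech compactification of $\mathbb{N}$, $\mathbb{N}^*=\beta\mathbb{N}\setminus\mathbb{N}$, $\tau$ the continuous extension of $n\mapsto n+1$. $\Omega$ is the quotient of $\beta\mathbb{N}\times[0,1]$ identifying $(\eta,1)$ with $(\tau\eta,0)$; $\Omega^*$ consists of classes $(\eta,u)$ with $\eta\in\mathbb{N}^*$; $\tau^s(\eta,u)=(\tau^{[u+s]}\eta,u+s-[u+s])$ for $s\in\mathbb{R}$ defines a flow on $\Omega^*$. $\mathscr{O}$ is a set containing exactly one representative of each orbit $\{\tau^x\omega : x\in\mathbb{R}\}$ in $\Omega^*$. Each $\omega=(\eta,u)$ is identified with the ultrafilter on $\mathbb{R}_+$ generated by $\{u+A:A\in\eta\}$. For $f\in L^\infty(\mathbb{R}_+)$, $f_\omega := \omega\text{-}\lim_s f(\cdot+s)$ (limit along this ultrafilter in the weak* topology of $L^\infty(\mathbb{R}_+)$), extended to $L^\infty(\mathbb{R})$ by $f_\omega(x) = f_{\tau^{-N}\omega}(N+x)$ for $x\in[-N,0]$, $N>0$.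 *)

theory Defs
  imports "HOL-Analysis.Analysis"
begin

definition Linf_Rp :: "(real \<Rightarrow> complex) set" where
  "Linf_Rp = {f. set_borel_measurable lebesgue {0..} f \<and>
                 (\<exists>C. AE x in lebesgue. x \<ge> 0 \<longrightarrow> norm (f x) \<le> C)}"

definition L1_Rp :: "(real \<Rightarrow> complex) set" where
  "L1_Rp = {g. set_integrable lebesgue {0..} g}"

definition pair_shift :: "(real \<Rightarrow> complex) \<Rightarrow> (real \<Rightarrow> complex) \<Rightarrow> real \<Rightarrow> complex" where
  "pair_shift f g s = (LINT x:{0..}|lebesgue. f (x + s) * g x)"

text \<open>K(f) = alpha: f(.+s) tends weak-* to the constant alpha as s tends to infinity\<close>
definition K_is :: "(real \<Rightarrow> complex) \<Rightarrow> complex \<Rightarrow> bool" where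
  "K_is f \<alpha> \<longleftrightarrow> (\<forall>g \<in> L1_Rp.
      ((\<lambda>s. pair_shift f g s) \<longlongrightarrow> \<alpha> * (LINT x:{0..}|lebesgue. g x)) at_top)"

section \<open>Stone-Cech compactification of N as ultrafilters\<close>

definition ultra :: "nat filter \<Rightarrow> bool" where
  "ultra F \<longleftrightarrow> F \<noteq> bot \<and> (\<forall>P. eventually P F \<or> eventually (\<lambda>x. \<not> P x) F)"

definition betaN :: "nat filter set" where
  "betaN = {F. ultra F}"

definition Nstar :: "nat filter set" where
  "Nstar = {F. ultra F \<and> (\<forall>n. eventually (\<lambda>x. x \<noteq> n) F)}"

text \<open>tau^k on N* for integer k (tau = extension of n \<mapsto> n+1; negative k gives the inverse on N*)\<close>
definition tau_pow :: "int \<Rightarrow> nat filter \<Rightarrow> nat filter" where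
  "tau_pow k \<eta> = filtermap (\<lambda>n. nat (int n + k)) \<eta>"

text \<open>points of Omega* are represented by their canonical representatives (eta,u), u in [0,1)\<close>
definition OmegaStar :: "(nat filter \<times> real) set" where
  "OmegaStar = {(\<eta>, u). \<eta> \<in> Nstar \<and> 0 \<le> u \<and> u < 1}"

definition flow :: "real \<Rightarrow> nat filter \<times> real \<Rightarrow> nat filter \<times> real" where
  "flow s \<omega> = (tau_pow \<lfloor>snd \<omega> + s\<rfloor> (fst \<omega>), snd \<omega> + s - of_int \<lfloor>snd \<omega> + s\<rfloor>)"

definition orbit :: "nat filter \<times> real \<Rightarrow> (nat filter \<times> real) set" where
  "orbit \<omega> = {flow s \<omega> | s. True}"

definition orbit_reps :: "(nat filter \<times> real) set \<Rightarrow> bool" where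
  "orbit_reps Reps \<longleftrightarrow> Reps \<subseteq> OmegaStar \<and> (\<forall>\<omega> \<in> OmegaStar. \<exists>!r. r \<in> Reps \<and> r \<in> orbit \<omega>)"

definition omega_filter :: "nat filter \<times> real \<Rightarrow> real filter" where
  "omega_filter \<omega> = filtermap (\<lambda>n. snd \<omega> + real n) (fst \<omega>)"

definition is_omega_lim :: "(real \<Rightarrow> complex) \<Rightarrow> nat filter \<times> real \<Rightarrow> (real \<Rightarrow> complex) \<Rightarrow> bool" where
  "is_omega_lim f \<omega> h \<longleftrightarrow> h \<in> Linf_Rp \<and> (\<forall>g \<in> L1_Rp.
      ((\<lambda>s. pair_shift f g s) \<longlongrightarrow> (LINT x:{0..}|lebesgue. h x * g x)) (omega_filter \<omega>))"

definition f_omega_Rp :: "(real \<Rightarrow> complex) \<Rightarrow> nat filter \<times> real \<Rightarrow> real \<Rightarrow> complex" where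
  "f_omega_Rp f \<omega> = (SOME h. is_omega_lim f \<omega> h)"

text \<open>extension to R: for x in [-N,0], f_omega(x) = f_{tau^{-N} omega}(N + x), here with N = ceiling(-x)\<close>
definition f_omega :: "(real \<Rightarrow> complex) \<Rightarrow> nat filter \<times> real \<Rightarrow> real \<Rightarrow> complex" where
  "f_omega f \<omega> x = (if 0 \<le> x then f_omega_Rp f \<omega> x
      else (let N = \<lceil>- x\<rceil> in f_omega_Rp f (flow (- of_int N) \<omega>) (of_int N + x)))"

end

theory Submission
  imports Defs
begin

lemma filtermap_cong_ev:
  assumes "eventually (\<lambda>x. f x = g x) F"
  shows "filtermap f F = filtermap g F"
  unfolding filter_eq_iff eventually_filtermap
  using assms by (auto elim: eventually_elim2)

lemma nstar_ev_ge:
  assumes "\<eta> \<in> Nstar" shows "eventually (\<lambda>n. m \<le> n) \<eta>"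
proof -
  have "\<forall>k\<in>{..<m}. eventually (\<lambda>n. n \<noteq> k) \<eta>" using assms by (auto simp: Nstar_def)
  then have "eventually (\<lambda>n. \<forall>k\<in>{..<m}. n \<noteq> k) \<eta>"
    by (rule eventually_ball_finite[rotated]) simp
  then show ?thesis by eventually_elim (auto simp: not_less[symmetric])
qed

lemma ultra_filtermap: "ultra F \<Longrightarrow> ultra (filtermap g F)"
  unfolding ultra_def by (auto simp: eventually_filtermap filtermap_bot_iff)

definition uf :: "'a filter \<Rightarrow> bool" where
  "uf F \<longleftrightarrow> F \<noteq> bot \<and> (\<forall>P. eventually P F \<or> eventually (\<lambda>x. \<not> P x) F)"

lemma ultra_filtermap_uf: "ultra F \<Longrightarrow> uf (filtermap g F)"
  unfolding ultra_def uf_def by (auto simp: eventually_filtermap filtermap_bot_iff)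

lemma tau_pow_Nstar:
  assumes "\<eta> \<in> Nstar" shows "tau_pow k \<eta> \<in> Nstar"
proof -
  have "eventually (\<lambda>n. nat (int n + k) \<noteq> m) \<eta>" for m
    using nstar_ev_ge[OF assms, of "nat (int m - k + 1)"]
    by eventually_elim auto
  then show ?thesis using assms
    by (auto simp: Nstar_def tau_pow_def ultra_filtermap eventually_filtermap)
qed

lemma tau_pow_add:
  assumes "\<eta> \<in> Nstar" shows "tau_pow a (tau_pow b \<eta>) = tau_pow (a + b) \<eta>"
proof -
  have "eventually (\<lambda>n. nat (int (nat (int n + b)) + a) = nat (int n + (a + b))) \<eta>"
    using nstar_ev_ge[OF assms, of "nat (- b)"] by eventually_elim auto
  then show ?thesis
    unfolding tau_pow_def filtermap_filtermap by (rule filtermap_cong_ev)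
qed

lemma tau_pow_0: "tau_pow 0 \<eta> = \<eta>"
  unfolding tau_pow_def by (simp add: filtermap_ident)

lemma frac_bounds: "0 \<le> x - real_of_int \<lfloor>x\<rfloor>" "x - real_of_int \<lfloor>x\<rfloor> < 1"
  by (simp_all add: of_int_floor_le) linarith

lemma flow_OmegaStar: "\<omega> \<in> OmegaStar \<Longrightarrow> flow s \<omega> \<in> OmegaStar"
  unfolding OmegaStar_def flow_def
  by (auto simp: tau_pow_Nstar frac_bounds)

lemma flow_add:
  assumes "\<omega> \<in> OmegaStar" shows "flow a (flow b \<omega>) = flow (a + b) \<omega>"
proof -
  obtain \<eta> u where w: "\<omega> = (\<eta>, u)" "\<eta> \<in> Nstar" using assms by (auto simp: OmegaStar_def)
  have fl: "\<lfloor>u + b - real_of_int \<lfloor>u + b\<rfloor> + a\<rfloor> + \<lfloor>u + b\<rfloor> = \<lfloor>u + (a + b)\<rfloor>"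
  proof -
    have "u + b - real_of_int \<lfloor>u + b\<rfloor> + a = (u + (a + b)) - real_of_int \<lfloor>u + b\<rfloor>" by simp
    then have "\<lfloor>u + b - real_of_int \<lfloor>u + b\<rfloor> + a\<rfloor> = \<lfloor>u + (a + b)\<rfloor> - \<lfloor>u + b\<rfloor>"
      by (metis floor_diff_of_int)
    then show ?thesis by simp
  qed
  show ?thesis using w fl
    by (simp add: flow_def tau_pow_add add.commute)
qed

lemma flow_0: "\<omega> \<in> OmegaStar \<Longrightarrow> flow 0 \<omega> = \<omega>"
proof -
  assume "\<omega> \<in> OmegaStar"
  then obtain \<eta> u where w: "\<omega> = (\<eta>, u)" "0 \<le> u" "u < 1" by (auto simp: OmegaStar_def)
  then have "\<lfloor>u\<rfloor> = 0" by (simp add: floor_eq_iff)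
  then show ?thesis using w by (simp add: flow_def tau_pow_0)
qed

lemma omega_filter_flow:
  assumes "\<omega> \<in> OmegaStar"
  shows "omega_filter (flow t \<omega>) = filtermap (\<lambda>s. s + t) (omega_filter \<omega>)"
proof -
  obtain \<eta> u where w: "\<omega> = (\<eta>, u)" "\<eta> \<in> Nstar" using assms by (auto simp: OmegaStar_def)
  have "eventually (\<lambda>n. u + t - real_of_int \<lfloor>u + t\<rfloor> + real (nat (int n + \<lfloor>u + t\<rfloor>))
          = u + real n + t) \<eta>"
    using nstar_ev_ge[OF w(2), of "nat (- \<lfloor>u + t\<rfloor>)"] by eventually_elim auto
  then show ?thesis using w
    by (simp add: omega_filter_def flow_def tau_pow_def filtermap_filtermap filtermap_cong_ev)
qed

lemma omega_filter_props:
  assumes "\<omega> \<in> OmegaStar"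
  shows "omega_filter \<omega> \<noteq> bot" "uf (omega_filter \<omega>)" "omega_filter \<omega> \<le> at_top"
    "eventually (\<lambda>s. 0 \<le> s) (omega_filter \<omega>)"
proof -
  obtain \<eta> u where w: "\<omega> = (\<eta>, u)" "\<eta> \<in> Nstar" "0 \<le> u" using assms by (auto simp: OmegaStar_def)
  show "uf (omega_filter \<omega>)" using w by (auto simp: omega_filter_def Nstar_def ultra_filtermap_uf)
  then show "omega_filter \<omega> \<noteq> bot" by (simp add: uf_def)
  show "omega_filter \<omega> \<le> at_top"
  proof (rule filter_leI)
    fix P :: "real \<Rightarrow> bool" assume "eventually P at_top"
    then obtain S where S: "\<And>x. x \<ge> S \<Longrightarrow> P x" by (auto simp: eventually_at_top_linorder)
    have "eventually (\<lambda>n. nat \<lceil>S\<rceil> \<le> n) \<eta>" by (rule nstar_ev_ge[OF w(2)])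
    then have "eventually (\<lambda>n. P (u + real n)) \<eta>"
      by eventually_elim (rule S, use w(3) in linarith)
    then show "eventually P (omega_filter \<omega>)" using w by (simp add: omega_filter_def eventually_filtermap)
  qed
  then show "eventually (\<lambda>s. 0 \<le> s) (omega_filter \<omega>)"
    by (rule filter_leD) (rule eventually_ge_at_top)
qed

lemma ex_max_ultra:
  fixes F :: "'a filter"
  assumes F: "F \<noteq> bot"
  shows "\<exists>U\<le>F. uf U"
proof -
  let ?X = "{G. G \<noteq> bot \<and> G \<le> F}"
  let ?R = "{(b, a). a \<noteq> bot \<and> a \<le> b \<and> b \<le> F}"
  have bot_notin_R: "c \<in> Chains ?R \<Longrightarrow> bot \<notin> c" for c
    by (auto simp: Chains_def)
  have [simp]: "Field ?R = ?X"
    by (auto simp: Field_def bot_unique)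
  have "\<exists>m\<in>Field ?R. \<forall>a\<in>Field ?R. (m, a) \<in> ?R \<longrightarrow> a = m" (is "\<exists>m\<in>?A. ?B m")
  proof (rule Zorns_po_lemma)
    show "Partial_order ?R"
      by (auto simp: partial_order_on_def preorder_on_def
          antisym_def refl_on_def trans_def Field_def bot_unique)
    show "\<exists>u\<in>Field ?R. \<forall>a\<in>C. (a, u) \<in> ?R" if C: "C \<in> Chains ?R" for C
    proof (simp, intro exI conjI ballI)
      have Inf_C: "Inf C \<noteq> bot" "Inf C \<le> F" if "C \<noteq> {}"
      proof -
        from C that have "Inf C = bot \<longleftrightarrow> (\<exists>x\<in>C. x = bot)"
          unfolding trivial_limit_def by (intro eventually_Inf_base) (auto simp: Chains_def)
        with C show "Inf C \<noteq> bot"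
          by (simp add: bot_notin_R)
        from that obtain x where "x \<in> C" by auto
        with C show "Inf C \<le> F"
          by (auto intro!: Inf_lower2[of x] simp: Chains_def)
      qed
      then have [simp]: "inf F (Inf C) = (if C = {} then F else Inf C)"
        using C by (auto simp add: inf_absorb2)
      from C show "inf F (Inf C) \<noteq> bot"
        by (simp add: F Inf_C)
      from C show "inf F (Inf C) \<le> F"
        by (simp add: Chains_def Inf_C F)
      with C show "inf F (Inf C) \<le> x" "x \<le> F" if "x \<in> C" for x
        using that  by (auto intro: Inf_lower simp: Chains_def)
    qed
  qed
  then obtain U where U: "U \<in> ?A" "?B U" ..
  have "uf U"
    unfolding uf_def
  proof (intro conjI allI)
    show "U \<noteq> bot" using U by auto
    fix P
    show "eventually P U \<or> eventually (\<lambda>x. \<not> P x) U"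
    proof (rule disjCI)
      assume "\<not> eventually (\<lambda>x. \<not> P x) U"
      then have ne: "inf U (principal {x. P x}) \<noteq> bot"
        by (simp add: trivial_limit_def eventually_inf_principal)
      have UF: "U \<le> F" using U(1) by simp
      have R: "(U, inf U (principal {x. P x})) \<in> ?R"
        using ne UF by (auto intro: le_infI1)
      have mem: "inf U (principal {x. P x}) \<in> Field ?R"
        using ne UF by (auto intro: le_infI1)
      have eq: "inf U (principal {x. P x}) = U"
        using U(2)[rule_format, OF mem R] .
      show "eventually P U"
        by (subst eq[symmetric]) (simp add: eventually_inf_principal)
    qed
  qed
  then show ?thesis using U by auto
qed

lemma ex_free_ultra:
  fixes S :: "nat set"
  assumes "infinite S"
  shows "\<exists>\<eta>\<in>Nstar. eventually (\<lambda>n. n \<in> S) \<eta>"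
proof -
  let ?F = "inf cofinite (principal S)"
  have "?F \<noteq> bot"
    using assms by (simp add: trivial_limit_def eventually_inf_principal not_eventually
        frequently_cofinite)
  then obtain U where U: "U \<le> ?F" "uf U" using ex_max_ultra by blast
  have "eventually (\<lambda>n. n \<in> S) U" using U(1)
    by (rule filter_leD) (simp add: eventually_inf_principal)
  moreover have "eventually (\<lambda>x. x \<noteq> n) U" for n
  proof -
    have "U \<le> cofinite" using U(1) by (simp add: le_inf_iff)
    then show ?thesis by (rule filter_leD) (simp add: eventually_cofinite)
  qed
  ultimately show ?thesis using U by (auto simp: Nstar_def uf_def ultra_def)
qed


definition F0 :: "(real \<Rightarrow> complex) \<Rightarrow> real \<Rightarrow> complex" where
  "F0 f x = indicator {0..} x *\<^sub>R f x"

lemma F0_simps: "0 \<le> x \<Longrightarrow> F0 f x = f x" "x < 0 \<Longrightarrow> F0 f x = 0"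
  by (auto simp: F0_def)

lemma F0_eq: "F0 f = (\<lambda>x. indicator {0..} x *\<^sub>R f x)"
  by (simp add: fun_eq_iff F0_def)

lemma Linf_meas: "f \<in> Linf_Rp \<Longrightarrow> F0 f \<in> borel_measurable lebesgue"
  by (simp add: Linf_Rp_def F0_eq set_borel_measurable_def)

lemma Linf_bound:
  assumes "f \<in> Linf_Rp"
  obtains C where "C > 0" "AE x in lebesgue. norm (F0 f x) \<le> C"
proof -
  obtain C where C: "AE x in lebesgue. x \<ge> 0 \<longrightarrow> norm (f x) \<le> C"
    using assms by (auto simp: Linf_Rp_def)
  have "AE x in lebesgue. norm (F0 f x) \<le> max C 1"
    using C by eventually_elim (auto simp: F0_def indicator_def)
  then show ?thesis using that[of "max C 1"] by auto
qed

lemma L1_Rp_iff: "g \<in> L1_Rp \<longleftrightarrow> integrable lebesgue (F0 g)"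
  by (simp add: L1_Rp_def set_integrable_def F0_eq)

lemma AE_translate:
  assumes "AE x in lebesgue. P x"
  shows "AE x in lebesgue. P (x + t)"
proof -
  obtain N where N: "N \<in> null_sets lebesgue" "{x. \<not> P x} \<subseteq> N"
    using assms by (auto simp: eventually_ae_filter)
  let ?N = "(\<lambda>x. - t + x) ` N"
  have img: "(\<lambda>x. 1 *\<^sub>R x + (- t)) ` N = ?N" by (auto simp: add.commute)
  have "?N \<in> sets lebesgue" using N lebesgue_sets_translation[of N "- t"] by auto
  moreover have "emeasure lebesgue ?N = 0"
    using emeasure_lebesgue_affine[of 1 "- t" N] N img by (simp add: null_setsD1[OF N(1)])
  ultimately have "?N \<in> null_sets lebesgue" by (simp add: null_sets_def)
  moreover have "{x. \<not> P (x + t)} \<subseteq> ?N"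
  proof
    fix x assume "x \<in> {x. \<not> P (x + t)}"
    then have "x + t \<in> N" using N by auto
    then show "x \<in> ?N" by (rule rev_image_eqI) simp
  qed
  ultimately show ?thesis by (auto simp: eventually_ae_filter)
qed

lemma meas_translate:
  fixes g :: "real \<Rightarrow> 'a::euclidean_space"
  assumes "g \<in> borel_measurable lebesgue"
  shows "(\<lambda>x. g (x + t)) \<in> borel_measurable lebesgue"
  using borel_measurable_affine[OF assms, of 1 t] by (simp add: add.commute)

lemma integrable_translate:
  fixes g :: "real \<Rightarrow> 'a::euclidean_space"
  shows "integrable lebesgue (\<lambda>x. g (x + t)) \<longleftrightarrow> integrable lebesgue g"
  using lebesgue_integrable_real_affine_iff[of 1 g t] by (simp add: add.commute)

lemma integral_translate:
  fixes g :: "real \<Rightarrow> 'a::euclidean_space"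
  shows "(\<integral>x. g (x + t) \<partial>lebesgue) = (\<integral>x. g x \<partial>lebesgue)"
  using lebesgue_integral_real_affine[of 1 g t] by (simp add: add.commute)

lemma integrable_bdd_mult:
  fixes g h :: "real \<Rightarrow> complex"
  assumes "integrable lebesgue g" "h \<in> borel_measurable lebesgue"
    "AE x in lebesgue. norm (h x) \<le> C"
  shows "integrable lebesgue (\<lambda>x. h x * g x)"
proof -
  have i: "integrable lebesgue (\<lambda>x. of_real C * g x)" using assms(1) by simp
  show ?thesis
  proof (rule Bochner_Integration.integrable_bound[OF i])
  show "(\<lambda>x. h x * g x) \<in> borel_measurable lebesgue"
    using assms(1,2) by (simp add: borel_measurable_integrable)
  show "AE x in lebesgue. norm (h x * g x) \<le> norm (of_real C * g x)"
    using assms(3)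
  proof eventually_elim
    case (elim x)
    then have "C \<ge> 0" using norm_ge_zero order_trans by blast
    then show ?case using elim by (simp add: norm_mult abs_of_nonneg mult_right_mono)
  qed
  qed
qed

definition PS :: "(real \<Rightarrow> complex) \<Rightarrow> (real \<Rightarrow> complex) \<Rightarrow> real \<Rightarrow> complex" where
  "PS f g s = (\<integral>x. F0 f (x + s) * g x \<partial>lebesgue)"

lemma PS_integrable:
  assumes "f \<in> Linf_Rp" "integrable lebesgue g"
  shows "integrable lebesgue (\<lambda>x. F0 f (x + s) * g x)"
proof -
  obtain C where C: "C > 0" "AE x in lebesgue. norm (F0 f x) \<le> C" using Linf_bound[OF assms(1)] .
  show ?thesis
    by (rule integrable_bdd_mult[OF assms(2) meas_translate[OF Linf_meas[OF assms(1)]]])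
       (rule AE_translate[OF C(2)])
qed

lemma PS_bound:
  assumes "f \<in> Linf_Rp" "AE x in lebesgue. norm (F0 f x) \<le> C" "integrable lebesgue g"
  shows "norm (PS f g s) \<le> C * (\<integral>x. norm (g x) \<partial>lebesgue)"
proof -
  have "norm (PS f g s) \<le> (\<integral>x. norm (F0 f (x + s) * g x) \<partial>lebesgue)"
    unfolding PS_def by (rule integral_norm_bound)
  also have "\<dots> \<le> (\<integral>x. C * norm (g x) \<partial>lebesgue)"
  proof (rule integral_mono_AE)
    show "integrable lebesgue (\<lambda>x. norm (F0 f (x + s) * g x))"
      using PS_integrable[OF assms(1,3)] by simp
    show "integrable lebesgue (\<lambda>x. C * norm (g x))" using assms(3) by simp
    show "AE x in lebesgue. norm (F0 f (x + s) * g x) \<le> C * norm (g x)"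
      using AE_translate[OF assms(2), of s]
      by eventually_elim (simp add: norm_mult mult_right_mono)
  qed
  also have "\<dots> = C * (\<integral>x. norm (g x) \<partial>lebesgue)" by simp
  finally show ?thesis .
qed

lemma PS_add:
  assumes "f \<in> Linf_Rp" "integrable lebesgue g1" "integrable lebesgue g2"
  shows "PS f (\<lambda>x. g1 x + g2 x) s = PS f g1 s + PS f g2 s"
  unfolding PS_def using PS_integrable[OF assms(1,2)] PS_integrable[OF assms(1,3)]
  by (simp add: distrib_left)

lemma PS_mult:
  shows "PS f (\<lambda>x. c * g x) s = c * PS f g s"
  unfolding PS_def by (simp add: mult.left_commute)

lemma pair_shift_PS:
  assumes "0 \<le> s"
  shows "pair_shift f g s = PS f (F0 g) s"
  unfolding pair_shift_def PS_def set_lebesgue_integral_def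
  by (rule Bochner_Integration.integral_cong[OF refl]) (use assms in \<open>auto simp: F0_def indicator_def\<close>)

lemma set_integral_F0: "(LINT x:{0..}|lebesgue. g x) = (\<integral>x. F0 g x \<partial>lebesgue)"
  by (simp add: set_lebesgue_integral_def F0_def)


lemma lmeas_small:
  assumes "S \<in> lmeasurable" "emeasure lebesgue S < ennreal e"
  shows "(\<integral>x. indicator S x \<partial>lebesgue) < (e::real)"
proof -
  have "emeasure lebesgue S = ennreal (measure lebesgue S)"
    using assms(1) by (rule emeasure_eq_measure2)
  then have "measure lebesgue S < e" using assms(2)
    by (metis ennreal_less_iff measure_nonneg not_less ennreal_leI)
  then show ?thesis by (simp add: integral_indicator)
qed

lemma compact_open_delta:
  fixes K U :: "real set"
  assumes "compact K" "open U" "K \<subseteq> U"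
  obtains d where "d > 0" "\<And>y z. y \<in> K \<Longrightarrow> dist y z < d \<Longrightarrow> z \<in> U"
proof (cases "K = {} \<or> U = UNIV")
  case True
  then show ?thesis using that[of 1] by auto
next
  case False
  then have ne: "K \<noteq> {}" "- U \<noteq> {}" by auto
  have "closed (- U)" using assms(2) by auto
  moreover have "K \<inter> - U = {}" using assms(3) by auto
  ultimately have pos: "0 < setdist K (- U)"
    using setdist_gt_0_compact_closed[OF assms(1)] ne by auto
  show ?thesis
  proof (rule that[OF pos])
    fix y z assume yz: "y \<in> K" "dist y z < setdist K (- U)"
    show "z \<in> U"
    proof (rule ccontr)
      assume "z \<notin> U"
      then have "setdist K (- U) \<le> dist y z" using yz(1) by (intro setdist_le_dist) auto
      then show False using yz(2) by simp
    qed
  qed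
qed

lemma tail_small:
  fixes A :: "real set" and e :: real
  assumes "A \<in> lmeasurable" "e > 0"
  obtains n :: nat where "(\<integral>x. indicat_real (A - {- real n..real n}) x \<partial>lebesgue) < e"
proof -
  have "(\<lambda>n. \<integral>x. indicat_real (A - {- real n..real n}) x \<partial>lebesgue) \<longlonglongrightarrow> (\<integral>x. (0::real) \<partial>(lebesgue::real measure))"
  proof (rule integral_dominated_convergence[where M=lebesgue and s="\<lambda>n. indicator (A - {- real n..real n})" and f="\<lambda>x. 0" and w="indicator A"])
    show "integrable lebesgue (indicat_real A)"
      using assms(1) by (simp add: lmeasurable_iff_integrable)
    show "(\<lambda>x. 0::real) \<in> borel_measurable lebesgue" by simp
    show "indicat_real (A - {- real n..real n}) \<in> borel_measurable lebesgue" for n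
      using assms(1) by (intro borel_measurable_indicator) (auto simp: fmeasurable_def)
    show "AE x in lebesgue. (\<lambda>n. indicat_real (A - {- real n..real n}) x) \<longlonglongrightarrow> 0"
    proof (rule AE_I2)
      fix x :: real
      have "eventually (\<lambda>n. real n \<ge> \<bar>x\<bar>) sequentially"
        by (rule eventually_sequentiallyI[of "nat \<lceil>\<bar>x\<bar>\<rceil>"]) linarith
      then have "eventually (\<lambda>n. indicat_real (A - {- real n..real n}) x = 0) sequentially"
        by eventually_elim (auto simp: indicator_def)
      then show "(\<lambda>n. indicat_real (A - {- real n..real n}) x) \<longlonglongrightarrow> 0"
        by (rule tendsto_eventually)
    qed
    show "AE x in lebesgue. norm (indicat_real (A - {- real n..real n}) x) \<le> indicat_real A x" for n
      by (rule AE_I2) (auto simp: indicator_def)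
  qed
  then have "(\<lambda>n. \<integral>x. indicat_real (A - {- real n..real n}) x \<partial>lebesgue) \<longlonglongrightarrow> 0" by simp
  from order_tendstoD(2)[OF this assms(2)] obtain n where
    "(\<integral>x. indicat_real (A - {- real n..real n}) x \<partial>lebesgue) < e"
    by (auto simp: eventually_sequentially)
  then show ?thesis by (rule that)
qed

lemma set_translate_cont:
  fixes A :: "real set"
  assumes "A \<in> lmeasurable" "e > 0"
  obtains d where "d > 0"
    "\<And>t. \<bar>t\<bar> < d \<Longrightarrow> (\<integral>x. \<bar>indicat_real A (x + t) - indicat_real A x\<bar> \<partial>lebesgue) \<le> (e::real)"
proof -
  define \<epsilon> where "\<epsilon> = e / 8"
  have \<epsilon>: "\<epsilon> > 0" using assms(2) by (simp add: \<epsilon>_def)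
  have A: "A \<in> sets lebesgue" using assms(1) by (simp add: fmeasurable_def)
  obtain U where U: "open U" "A \<subseteq> U" "U - A \<in> lmeasurable" "emeasure lebesgue (U - A) < ennreal \<epsilon>"
    using sets_lebesgue_outer_open[OF A \<epsilon>] by blast
  obtain T where T: "closed T" "T \<subseteq> A" "A - T \<in> lmeasurable" "emeasure lebesgue (A - T) < ennreal \<epsilon>"
    using sets_lebesgue_inner_closed[OF A \<epsilon>] by blast
  obtain n :: nat where n: "(\<integral>x. indicat_real (A - {- real n..real n}) x \<partial>lebesgue) < \<epsilon>"
    using tail_small[OF assms(1) \<epsilon>] by blast
  define K where "K = T \<inter> {- real n..real n}"
  have K: "compact K" unfolding K_def by (rule closed_Int_compact[OF T(1)]) simp
  have KU: "K \<subseteq> U" using T(2) U(2) by (auto simp: K_def)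
  obtain d where d: "d > 0" and dK: "\<And>y z. y \<in> K \<Longrightarrow> dist y z < d \<Longrightarrow> z \<in> U"
    using compact_open_delta[OF K U(1) KU] by blast
  have AKm: "A - K \<in> lmeasurable"
    using assms(1) lmeasurable_compact[OF K] by (intro fmeasurable_Diff) (auto simp: fmeasurable_def)
  have ATi: "integrable lebesgue (indicat_real (A - T))"
    using T(3) by (simp add: lmeasurable_iff_integrable)
  have Ani: "integrable lebesgue (indicat_real (A - {- real n..real n}))"
  proof -
    have "A - {- real n..real n} \<in> lmeasurable"
      using assms(1) by (intro fmeasurable_Diff) auto
    then show ?thesis by (simp add: lmeasurable_iff_integrable)
  qed
  have AKi: "integrable lebesgue (indicat_real (A - K))"
    using AKm by (simp add: lmeasurable_iff_integrable)
  have UAi: "integrable lebesgue (indicat_real (U - A))"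
    using U(3) by (simp add: lmeasurable_iff_integrable)
  have AK: "(\<integral>x. indicat_real (A - K) x \<partial>lebesgue) \<le> 2 * \<epsilon>"
  proof -
    have "(\<integral>x. indicat_real (A - K) x \<partial>lebesgue)
        \<le> (\<integral>x. indicat_real (A - T) x + indicat_real (A - {- real n..real n}) x \<partial>lebesgue)"
      by (rule integral_mono[OF AKi Bochner_Integration.integrable_add[OF ATi Ani]])
         (auto simp: K_def indicator_def)
    also have "\<dots> = (\<integral>x. indicat_real (A - T) x \<partial>lebesgue) + (\<integral>x. indicat_real (A - {- real n..real n}) x \<partial>lebesgue)"
      by (rule Bochner_Integration.integral_add[OF ATi Ani])
    also have "\<dots> \<le> 2 * \<epsilon>" using lmeas_small[OF T(3,4)] n by simp
    finally show ?thesis .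
  qed
  have UA: "(\<integral>x. indicat_real (U - A) x \<partial>lebesgue) < \<epsilon>" by (rule lmeas_small[OF U(3,4)])
  show ?thesis
  proof (rule that[OF d])
    fix t :: real assume t: "\<bar>t\<bar> < d"
    let ?g = "\<lambda>x. indicat_real (A - K) (x + t) + indicat_real (U - A) x + indicat_real (A - K) x + indicat_real (U - A) (x + t) :: real"
    have pw: "\<bar>indicat_real A (x + t) - indicat_real A x\<bar> \<le> ?g x" for x
    proof -
      have 1: "x \<in> U" if "x + t \<in> K" using dK[OF that, of x] t by (simp add: dist_real_def)
      have 2: "x + t \<in> U" if "x \<in> K" using dK[OF that, of "x + t"] t by (simp add: dist_real_def)
      show ?thesis using 1 2 by (auto simp: indicator_def)
    qed
    have gi: "integrable lebesgue ?g"
      using AKi UAi integrable_translate[of "indicat_real (A - K)" t] integrable_translate[of "indicat_real (U - A)" t]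
      by auto
    have "(\<integral>x. \<bar>indicat_real A (x + t) - indicat_real A x\<bar> \<partial>lebesgue) \<le> (\<integral>x. ?g x \<partial>lebesgue)"
    proof (rule integral_mono[OF _ gi])
      show "integrable lebesgue (\<lambda>x. \<bar>indicat_real A (x + t) - indicat_real A x\<bar>)"
        using assms(1) integrable_translate[of "indicat_real A" t]
        by (auto simp: lmeasurable_iff_integrable)
    qed (rule pw)
    also have "(\<integral>x. ?g x \<partial>lebesgue) = 2 * (\<integral>x. indicat_real (A - K) x \<partial>lebesgue) + 2 * (\<integral>x. indicat_real (U - A) x \<partial>lebesgue)"
      using AKi UAi integrable_translate[of "indicat_real (A - K)" t] integrable_translate[of "indicat_real (U - A)" t]
        integral_translate[of "indicat_real (A - K)" t] integral_translate[of "indicat_real (U - A)" t]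
      by simp
    also have "\<dots> \<le> e" using AK UA assms(2) unfolding \<epsilon>_def by linarith
    finally show "(\<integral>x. \<bar>indicat_real A (x + t) - indicat_real A x\<bar> \<partial>lebesgue) \<le> e" .
  qed
qed

lemma integrable_shift_diff:
  fixes g :: "real \<Rightarrow> complex"
  assumes "integrable lebesgue g"
  shows "integrable lebesgue (\<lambda>x. norm (g (x + t) - g x))"
  using assms integrable_translate[of g t] by simp

lemma L1_translate_cont:
  fixes g :: "real \<Rightarrow> complex"
  assumes "integrable lebesgue g"
  shows "\<forall>e>0. \<exists>d>0. \<forall>t. \<bar>t\<bar> < d \<longrightarrow> (\<integral>x. norm (g (x + t) - g x) \<partial>lebesgue) \<le> e"
  using assms
proof (induct rule: integrable_induct)
  case (base A c)
  show ?case
  proof (intro allI impI)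
    fix e :: real assume e: "e > 0"
    have Am: "A \<in> lmeasurable" using base by (simp add: fmeasurableI)
    have nc: "norm c + 1 > 0" by (smt (verit) norm_ge_zero)
    have e': "e / (norm c + 1) > 0" using e nc by simp
    obtain d where d: "d > 0" and dd: "\<And>t. \<bar>t\<bar> < d \<Longrightarrow>
        (\<integral>x. \<bar>indicat_real A (x + t) - indicat_real A x\<bar> \<partial>lebesgue) \<le> e / (norm c + 1)"
      using set_translate_cont[OF Am e'] by blast
    show "\<exists>d>0. \<forall>t. \<bar>t\<bar> < d \<longrightarrow> (\<integral>x. norm (indicat_real A (x + t) *\<^sub>R c - indicat_real A x *\<^sub>R c) \<partial>lebesgue) \<le> e"
    proof (intro exI conjI allI impI)
      show "d > 0" by fact
      fix t :: real assume t: "\<bar>t\<bar> < d"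
      have "(\<integral>x. norm (indicat_real A (x + t) *\<^sub>R c - indicat_real A x *\<^sub>R c) \<partial>lebesgue)
          = (\<integral>x. norm c * \<bar>indicat_real A (x + t) - indicat_real A x\<bar> \<partial>lebesgue)"
        by (rule Bochner_Integration.integral_cong[OF refl])
           (simp add: scaleR_diff_left[symmetric] mult.commute)
      also have "\<dots> = norm c * (\<integral>x. \<bar>indicat_real A (x + t) - indicat_real A x\<bar> \<partial>lebesgue)"
        by simp
      also have "\<dots> \<le> norm c * (e / (norm c + 1))"
        by (rule mult_left_mono[OF dd[OF t]]) simp
      also have "\<dots> \<le> e"
      proof -
        have "norm c * (e / (norm c + 1)) = e * (norm c / (norm c + 1))" by simp
        also have "\<dots> \<le> e * 1"
          using e nc by (intro mult_left_mono) (auto simp: divide_le_eq_1)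
        finally show ?thesis by simp
      qed
      finally show "(\<integral>x. norm (indicat_real A (x + t) *\<^sub>R c - indicat_real A x *\<^sub>R c) \<partial>lebesgue) \<le> e" .
    qed
  qed
next
  case (add f g)
  show ?case
  proof (intro allI impI)
    fix e :: real assume e: "e > 0"
    obtain d1 where d1: "d1 > 0" "\<forall>t. \<bar>t\<bar> < d1 \<longrightarrow> (\<integral>x. norm (f (x + t) - f x) \<partial>lebesgue) \<le> e / 2"
      using add(2) e by (meson half_gt_zero)
    obtain d2 where d2: "d2 > 0" "\<forall>t. \<bar>t\<bar> < d2 \<longrightarrow> (\<integral>x. norm (g (x + t) - g x) \<partial>lebesgue) \<le> e / 2"
      using add(4) e by (meson half_gt_zero)
    show "\<exists>d>0. \<forall>t. \<bar>t\<bar> < d \<longrightarrow> (\<integral>x. norm (f (x + t) + g (x + t) - (f x + g x)) \<partial>lebesgue) \<le> e"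
    proof (intro exI conjI allI impI)
      show "min d1 d2 > 0" using d1 d2 by simp
      fix t :: real assume t: "\<bar>t\<bar> < min d1 d2"
      have "(\<integral>x. norm (f (x + t) + g (x + t) - (f x + g x)) \<partial>lebesgue)
          \<le> (\<integral>x. norm (f (x + t) - f x) + norm (g (x + t) - g x) \<partial>lebesgue)"
      proof (rule integral_mono)
        show "integrable lebesgue (\<lambda>x. norm (f (x + t) + g (x + t) - (f x + g x)))"
          using add(1,3) integrable_translate[of f t] integrable_translate[of g t] by simp
        show "integrable lebesgue (\<lambda>x. norm (f (x + t) - f x) + norm (g (x + t) - g x))"
          using integrable_shift_diff[OF add(1)] integrable_shift_diff[OF add(3)] by simp
        show "norm (f (x + t) + g (x + t) - (f x + g x)) \<le> norm (f (x + t) - f x) + norm (g (x + t) - g x)" for x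
          by (metis (no_types, lifting) add_diff_add norm_triangle_ineq)
      qed
      also have "\<dots> = (\<integral>x. norm (f (x + t) - f x) \<partial>lebesgue) + (\<integral>x. norm (g (x + t) - g x) \<partial>lebesgue)"
        using integrable_shift_diff[OF add(1)] integrable_shift_diff[OF add(3)] by simp
      also have "\<dots> \<le> e" using d1(2) d2(2) t by fastforce
      finally show "(\<integral>x. norm (f (x + t) + g (x + t) - (f x + g x)) \<partial>lebesgue) \<le> e" .
    qed
  qed
next
  case (lim f s)
  have D: "(\<lambda>i. \<integral>x. norm (s i x - f x) \<partial>lebesgue) \<longlonglongrightarrow> (\<integral>x. (0::real) \<partial>(lebesgue::real measure))"
  proof (rule integral_dominated_convergence[where w="\<lambda>x. 3 * norm (f x)"])
    show "integrable lebesgue (\<lambda>x. 3 * norm (f x))" using lim(5) by simp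
    show "(\<lambda>x. 0::real) \<in> borel_measurable lebesgue" by simp
    show "(\<lambda>x. norm (s i x - f x)) \<in> borel_measurable lebesgue" for i
      using lim(1,5) by (simp add: borel_measurable_integrable)
    show "AE x in lebesgue. (\<lambda>i. norm (s i x - f x)) \<longlonglongrightarrow> 0"
      using lim(3) by (intro AE_I2) (simp add: tendsto_norm_zero_iff LIM_zero_iff tendsto_diff)
    show "AE x in lebesgue. norm (norm (s i x - f x)) \<le> 3 * norm (f x)" for i
    proof (rule AE_I2)
      fix x :: real
      have "norm (s i x - f x) \<le> norm (s i x) + norm (f x)" by (rule norm_triangle_ineq4)
      then show "norm (norm (s i x - f x)) \<le> 3 * norm (f x)" using lim(4)[of x i] by simp
    qed
  qed
  show ?case
  proof (intro allI impI)
    fix e :: real assume e: "e > 0"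
    have "e / 3 > 0" using e by simp
    from order_tendstoD(2)[OF D[simplified] this] obtain i where
      i: "(\<integral>x. norm (s i x - f x) \<partial>lebesgue) < e / 3"
      by (auto simp: eventually_sequentially)
    obtain d where d: "d > 0" "\<forall>t. \<bar>t\<bar> < d \<longrightarrow> (\<integral>x. norm (s i (x + t) - s i x) \<partial>lebesgue) \<le> e / 3"
      using lim(2)[of i] \<open>e / 3 > 0\<close> by blast
    show "\<exists>d>0. \<forall>t. \<bar>t\<bar> < d \<longrightarrow> (\<integral>x. norm (f (x + t) - f x) \<partial>lebesgue) \<le> e"
    proof (intro exI conjI allI impI)
      show "d > 0" by fact
      fix t :: real assume t: "\<bar>t\<bar> < d"
      have sf: "integrable lebesgue (\<lambda>x. norm (s i x - f x))" using lim(1,5) by simp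
      have sft: "integrable lebesgue (\<lambda>x. norm (s i (x + t) - f (x + t)))"
        using sf integrable_translate[of "\<lambda>x. norm (s i x - f x)" t] by simp
      have "(\<integral>x. norm (f (x + t) - f x) \<partial>lebesgue)
          \<le> (\<integral>x. norm (s i (x + t) - f (x + t)) + norm (s i (x + t) - s i x) + norm (s i x - f x) \<partial>lebesgue)"
      proof (rule integral_mono)
        show "integrable lebesgue (\<lambda>x. norm (f (x + t) - f x))" by (rule integrable_shift_diff[OF lim(5)])
        show "integrable lebesgue (\<lambda>x. norm (s i (x + t) - f (x + t)) + norm (s i (x + t) - s i x) + norm (s i x - f x))"
          using sft integrable_shift_diff[OF lim(1)[of i], of t] sf by simp
        show "norm (f (x + t) - f x) \<le> norm (s i (x + t) - f (x + t)) + norm (s i (x + t) - s i x) + norm (s i x - f x)" for x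
        proof -
          have "f (x + t) - f x = (s i (x + t) - s i x) + (s i x - f x) - (s i (x + t) - f (x + t))" by simp
          then have "norm (f (x + t) - f x) \<le> norm ((s i (x + t) - s i x) + (s i x - f x)) + norm (s i (x + t) - f (x + t))"
            by (metis norm_triangle_ineq4)
          also have "\<dots> \<le> norm (s i (x + t) - s i x) + norm (s i x - f x) + norm (s i (x + t) - f (x + t))"
            using norm_triangle_ineq[of "s i (x + t) - s i x" "s i x - f x"] by simp
          finally show ?thesis by simp
        qed
      qed
      also have "\<dots> = (\<integral>x. norm (s i (x + t) - f (x + t)) \<partial>lebesgue) + (\<integral>x. norm (s i (x + t) - s i x) \<partial>lebesgue)
          + (\<integral>x. norm (s i x - f x) \<partial>lebesgue)"
        using sft integrable_shift_diff[OF lim(1)[of i], of t] sf by simp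
      also have "(\<integral>x. norm (s i (x + t) - f (x + t)) \<partial>lebesgue) = (\<integral>x. norm (s i x - f x) \<partial>lebesgue)"
        using integral_translate[of "\<lambda>x. norm (s i x - f x)" t] by simp
      also have "(\<integral>x. norm (s i x - f x) \<partial>lebesgue) + (\<integral>x. norm (s i (x + t) - s i x) \<partial>lebesgue)
          + (\<integral>x. norm (s i x - f x) \<partial>lebesgue) \<le> e"
        using i d(2) t by fastforce
      finally show "(\<integral>x. norm (f (x + t) - f x) \<partial>lebesgue) \<le> e" .
    qed
  qed
qed


definition wt :: "real \<Rightarrow> real" where
  "wt x = indicator {0..} x * exp (- x)"

lemma wt_nonneg: "0 \<le> wt x" by (simp add: wt_def)
lemma wt_pos: "0 \<le> x \<Longrightarrow> 0 < wt x" by (simp add: wt_def)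
lemma wt_neg: "x < 0 \<Longrightarrow> wt x = 0" by (simp add: wt_def)

lemma id_meas_lebesgue[measurable]: "(\<lambda>x::real. x) \<in> borel_measurable lebesgue"
proof -
  have "(\<lambda>x::real. x) \<in> borel_measurable lborel" by (simp add: measurable_lborel2)
  then have "(\<lambda>x::real. x) \<in> borel_measurable (completion lborel)" by (rule measurable_completion)
  then show ?thesis by simp
qed

lemma wt_meas_borel: "wt \<in> borel_measurable borel"
  unfolding wt_def by measurable

lemma wt_meas[measurable]: "wt \<in> borel_measurable lebesgue"
proof -
  have "wt \<in> borel_measurable lborel" using wt_meas_borel by (simp add: measurable_lborel2)
  then have "wt \<in> borel_measurable (completion lborel)" by (rule measurable_completion)
  then show ?thesis by simp
qed

lemma wt_int: "integrable lebesgue wt"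
proof -
  have "integrable lebesgue (\<lambda>x::real. indicat_real {0..} x *\<^sub>R exp (- 1 * x))"
    by (intro nonnegative_absolutely_integrable_1 [unfolded set_integrable_def] integrable_on_exp_minus_to_infinity) auto
  then show ?thesis
    by (simp add: wt_def[abs_def])
qed

lemma wt_ind_int: "A \<in> sets lebesgue \<Longrightarrow> integrable lebesgue (\<lambda>x. wt x * indicator A x)"
  using integrable_mult_indicator[OF _ wt_int, of A] by (simp add: mult.commute)

lemma sigma_finite_lebesgue: "sigma_finite_measure (lebesgue :: real measure)"
  unfolding sigma_finite_measure_def
proof (intro exI[of _ "range (\<lambda>n::nat. {- real n..real n})"] conjI)
  show "\<Union> (range (\<lambda>n::nat. {- real n..real n})) = space lebesgue"
  proof (auto)
    fix x :: real
    show "\<exists>n. - real n \<le> x \<and> x \<le> real n"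
      by (rule exI[of _ "nat \<lceil>\<bar>x\<bar>\<rceil>"]) linarith
  qed
qed auto

lemma RN_real:
  fixes l :: "real set \<Rightarrow> real" and C :: real
  assumes C: "0 \<le> C"
    and bnd: "\<And>A. A \<in> sets lebesgue \<Longrightarrow> \<bar>l A\<bar> \<le> C * (\<integral>x. wt x * indicator A x \<partial>lebesgue)"
    and add: "\<And>A B. A \<in> sets lebesgue \<Longrightarrow> B \<in> sets lebesgue \<Longrightarrow> A \<inter> B = {} \<Longrightarrow> l (A \<union> B) = l A + l B"
  obtains h where "h \<in> borel_measurable lebesgue" "AE x in lebesgue. \<bar>h x\<bar> \<le> C"
    "\<And>A. A \<in> sets lebesgue \<Longrightarrow> l A = (\<integral>x. h x * wt x * indicator A x \<partial>lebesgue)"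
proof -
  define W where "W A = (\<integral>x. wt x * indicator A x \<partial>lebesgue)" for A :: "real set"
  define \<nu> where "\<nu> A = l A + C * W A" for A
  have W0: "0 \<le> W A" for A unfolding W_def by (rule integral_nonneg_AE) (simp add: wt_nonneg)
  have Wadd: "W (A \<union> B) = W A + W B" if "A \<in> sets lebesgue" "B \<in> sets lebesgue" "A \<inter> B = {}" for A B
  proof -
    have "W (A \<union> B) = (\<integral>x. wt x * indicator A x + wt x * indicator B x \<partial>lebesgue)"
      unfolding W_def using that(3) by (intro Bochner_Integration.integral_cong) (auto simp: indicator_def)
    also have "\<dots> = W A + W B" unfolding W_def
      using wt_ind_int[OF that(1)] wt_ind_int[OF that(2)] by simp
    finally show ?thesis .
  qed
  have l0: "l {} = 0" using add[of "{}" "{}"] by simp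
  have \<nu>pos: "0 \<le> \<nu> A" if "A \<in> sets lebesgue" for A
    using bnd[OF that] by (simp add: \<nu>_def W_def abs_le_iff)
  have \<nu>le: "\<nu> A \<le> 2 * C * W A" if "A \<in> sets lebesgue" for A
    using bnd[OF that] by (simp add: \<nu>_def W_def abs_le_iff)
  have \<nu>add: "\<nu> (A \<union> B) = \<nu> A + \<nu> B" if "A \<in> sets lebesgue" "B \<in> sets lebesgue" "A \<inter> B = {}" for A B
    using add[OF that] Wadd[OF that] by (simp add: \<nu>_def algebra_simps)
  have \<nu>0: "\<nu> {} = 0" using l0 by (simp add: \<nu>_def W_def)
  have ca: "(\<Sum>i. ennreal (\<nu> (F i))) = ennreal (\<nu> (\<Union>(range F)))"
    if F: "range F \<subseteq> sets lebesgue" "disjoint_family F" for F :: "nat \<Rightarrow> real set"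
  proof -
    define S where "S n = (\<Union>i<n. F i)" for n
    define U where "U = \<Union>(range F)"
    have Fm: "F i \<in> sets lebesgue" for i using F by auto
    have Sm: "S n \<in> sets lebesgue" for n unfolding S_def using Fm by auto
    have Um: "U \<in> sets lebesgue" unfolding U_def using Fm by auto
    have part: "\<nu> (S n) = (\<Sum>i<n. \<nu> (F i))" for n
    proof (induct n)
      case 0 then show ?case by (simp add: S_def \<nu>0)
    next
      case (Suc n)
      have "S (Suc n) = S n \<union> F n" by (auto simp: S_def lessThan_Suc)
      moreover have "S n \<inter> F n = {}"
      proof -
        { fix x i assume xi: "x \<in> F n" "x \<in> F i" "i < n"
          then have "F i \<inter> F n \<noteq> {}" by auto
          moreover have "i \<noteq> n" using xi(3) by simp
          ultimately have False using F(2) by (auto simp: disjoint_family_on_def) }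
        then show ?thesis by (auto simp: S_def)
      qed
      ultimately show ?case using \<nu>add[OF Sm Fm] Suc by simp
    qed
    have SU: "S n \<subseteq> U" for n by (auto simp: S_def U_def)
    have diff: "\<nu> U = \<nu> (S n) + \<nu> (U - S n)" for n
    proof -
      have "U = S n \<union> (U - S n)" using SU by auto
      then have "\<nu> U = \<nu> (S n \<union> (U - S n))" by simp
      also have "\<dots> = \<nu> (S n) + \<nu> (U - S n)" using Sm Um by (intro \<nu>add) auto
      finally show ?thesis .
    qed
    have WD: "(\<lambda>n. W (U - S n)) \<longlonglongrightarrow> 0"
    proof -
      have "(\<lambda>n. \<integral>x. wt x * indicator (U - S n) x \<partial>lebesgue) \<longlonglongrightarrow> (\<integral>x. (0::real) \<partial>(lebesgue::real measure))"
      proof (rule integral_dominated_convergence[where w=wt])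
        show "integrable lebesgue wt" by (rule wt_int)
        show "(\<lambda>x. 0::real) \<in> borel_measurable lebesgue" by simp
        show "(\<lambda>x. wt x * indicat_real (U - S n) x) \<in> borel_measurable lebesgue" for n
          using Um Sm by (intro borel_measurable_times wt_meas borel_measurable_indicator) auto
        show "AE x in lebesgue. (\<lambda>n. wt x * indicat_real (U - S n) x) \<longlonglongrightarrow> 0"
        proof (rule AE_I2)
          fix x
          have "eventually (\<lambda>n. wt x * indicat_real (U - S n) x = 0) sequentially"
          proof (cases "x \<in> U")
            case True
            then obtain i where "x \<in> F i" by (auto simp: U_def)
            then have "\<forall>n\<ge>Suc i. x \<in> S n" by (auto simp: S_def)
            then show ?thesis unfolding eventually_sequentially by (auto simp: indicator_def)
          next
            case False then show ?thesis by (simp add: indicator_def)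
          qed
          then show "(\<lambda>n. wt x * indicat_real (U - S n) x) \<longlonglongrightarrow> 0" by (rule tendsto_eventually)
        qed
        show "AE x in lebesgue. norm (wt x * indicat_real (U - S n) x) \<le> wt x" for n
          by (rule AE_I2) (simp add: wt_nonneg indicator_def)
      qed
      then show ?thesis by (simp add: W_def)
    qed
    have "(\<lambda>n. \<nu> (S n)) \<longlonglongrightarrow> \<nu> U"
    proof -
      have "(\<lambda>n. \<nu> U - \<nu> (U - S n)) \<longlonglongrightarrow> \<nu> U - 0"
      proof (intro tendsto_diff tendsto_const)
        have up: "(\<lambda>n. 2 * C * W (U - S n)) \<longlonglongrightarrow> 0"
          using tendsto_mult[OF tendsto_const WD, of "2 * C"] by simp
        have USm: "U - S n \<in> sets lebesgue" for n using Um Sm by blast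
        have e1: "eventually (\<lambda>n. 0 \<le> \<nu> (U - S n)) sequentially"
          by (rule always_eventually) (intro allI \<nu>pos USm)
        have e2: "eventually (\<lambda>n. \<nu> (U - S n) \<le> 2 * C * W (U - S n)) sequentially"
          by (rule always_eventually) (intro allI \<nu>le USm)
        show "(\<lambda>n. \<nu> (U - S n)) \<longlonglongrightarrow> 0"
          by (rule tendsto_sandwich[OF e1 e2 tendsto_const up])
      qed
      moreover have "(\<lambda>n. \<nu> U - \<nu> (U - S n)) = (\<lambda>n. \<nu> (S n))"
      proof
        fix n show "\<nu> U - \<nu> (U - S n) = \<nu> (S n)" using diff[of n] by simp
      qed
      ultimately show ?thesis by simp
    qed
    then have "(\<lambda>i. \<nu> (F i)) sums \<nu> U" unfolding sums_def part[symmetric] .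
    then show ?thesis unfolding U_def
      by (intro suminf_ennreal_eq) (use \<nu>pos Fm in auto)
  qed
  define N where "N = measure_of (space lebesgue) (sets lebesgue) (\<lambda>A. ennreal (\<nu> A))"
  have sa: "sigma_algebra (space lebesgue) (sets (lebesgue::real measure))"
    by (rule sets.sigma_algebra_axioms)
  have emN: "emeasure N A = ennreal (\<nu> A)" if "A \<in> sets lebesgue" for A
    unfolding N_def
  proof (rule emeasure_measure_of_sigma[OF sa _ _ that])
    show "positive (sets lebesgue) (\<lambda>A. ennreal (\<nu> A))"
      by (simp add: positive_def \<nu>0)
    show "countably_additive (sets lebesgue) (\<lambda>A. ennreal (\<nu> A))"
      unfolding countably_additive_def using ca by blast
  qed
  have setsN: "sets N = sets lebesgue" unfolding N_def by (rule sets.sets_measure_of_eq)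
  have ac: "absolutely_continuous lebesgue N"
    unfolding absolutely_continuous_def
  proof
    fix A assume A: "A \<in> null_sets (lebesgue::real measure)"
    then have Am: "A \<in> sets lebesgue" by auto
    have "W A = 0" unfolding W_def
      by (rule integral_eq_zero_AE) (use AE_not_in[OF A] in \<open>auto simp: indicator_def\<close>)
    then have "l A = 0" using bnd[OF Am] by (simp add: W_def)
    then have "\<nu> A = 0" using \<open>W A = 0\<close> by (simp add: \<nu>_def)
    then show "A \<in> null_sets N" using emN[OF Am] Am by (simp add: null_sets_def setsN)
  qed
  obtain d where d: "d \<in> borel_measurable lebesgue" "density lebesgue d = N"
    using sigma_finite_measure.Radon_Nikodym[OF sigma_finite_lebesgue ac setsN] by blast
  have \<nu>d: "ennreal (\<nu> A) = (\<integral>\<^sup>+x. d x * indicator A x \<partial>lebesgue)" if "A \<in> sets lebesgue" for A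
    using emN[OF that] emeasure_density[OF d(1) that] d(2) by simp
  have Wi: "W A = (\<integral>x. wt x * indicator A x \<partial>lebesgue)" for A by (simp add: W_def)
  define B where "B = {x. ennreal (2 * C * wt x) < d x}"
  have Bm: "B \<in> sets lebesgue"
  proof -
    have "Measurable.pred lebesgue (\<lambda>x. ennreal (2 * C * wt x) < d x)"
      using d(1) by measurable
    then show ?thesis by (simp add: pred_def B_def)
  qed
  have gB: "integrable lebesgue (\<lambda>x. 2 * C * (wt x * indicator B x))"
    using wt_ind_int[OF Bm] by simp
  have AEB: "AE x in lebesgue. x \<notin> B"
  proof -
    let ?g = "\<lambda>x. ennreal (2 * C * (wt x * indicator B x))"
    let ?f = "\<lambda>x. d x * indicator B x"
    have gfin: "(\<integral>\<^sup>+x. ?g x \<partial>lebesgue) = ennreal (2 * C * W B)"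
      using nn_integral_eq_integral[OF gB] C by (simp add: W_def wt_nonneg)
    have fle: "(\<integral>\<^sup>+x. ?f x \<partial>lebesgue) \<le> (\<integral>\<^sup>+x. ?g x \<partial>lebesgue)"
      unfolding gfin \<nu>d[OF Bm, symmetric] using \<nu>le[OF Bm] by (rule ennreal_leI)
    have "(\<integral>\<^sup>+x. ?f x - ?g x \<partial>lebesgue) = (\<integral>\<^sup>+x. ?f x \<partial>lebesgue) - (\<integral>\<^sup>+x. ?g x \<partial>lebesgue)"
    proof (rule nn_integral_diff)
      show "?f \<in> borel_measurable lebesgue" using d(1) Bm by measurable
      show "?g \<in> borel_measurable lebesgue" using Bm by measurable
      show "integral\<^sup>N lebesgue ?g \<noteq> \<infinity>" using gfin by simp
      show "AE x in lebesgue. ?g x \<le> ?f x"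
        by (rule AE_I2) (auto simp: B_def indicator_def less_imp_le)
    qed
    also have "\<dots> = 0"
    proof -
      have "(\<integral>\<^sup>+x. ?f x \<partial>lebesgue) < top"
        using fle gfin ennreal_less_top le_less_trans by metis
      then show ?thesis using fle by (simp add: diff_eq_0_iff_ennreal)
    qed
    finally have "AE x in lebesgue. ?f x - ?g x = 0"
      by (subst (asm) nn_integral_0_iff_AE) (use d(1) Bm in measurable)
    then show ?thesis
    proof eventually_elim
      case (elim x)
      show ?case
      proof
        assume xB: "x \<in> B"
        then have "d x \<le> ennreal (2 * C * wt x)" using elim ennreal_minus_eq_0 by force
        then show False using xB by (simp add: B_def not_less[symmetric])
      qed
    qed
  qed
  define dr where "dr x = enn2real (d x)" for x
  have drm: "dr \<in> borel_measurable lebesgue" unfolding dr_def using d(1) by measurable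
  have AEdr: "AE x in lebesgue. d x = ennreal (dr x) \<and> 0 \<le> dr x \<and> dr x \<le> 2 * C * wt x"
    using AEB
  proof eventually_elim
    case (elim x)
    then have le: "d x \<le> ennreal (2 * C * wt x)" by (simp add: B_def not_less)
    then have fin: "d x < top" using ennreal_less_top le_less_trans by blast
    have "dr x \<le> 2 * C * wt x"
      using enn2real_mono[OF le] C wt_nonneg[of x] by (simp add: dr_def)
    then show ?case using fin by (simp add: dr_def ennreal_enn2real)
  qed
  have dri: "integrable lebesgue (\<lambda>x. dr x * indicator A x)" if "A \<in> sets lebesgue" for A
  proof (rule Bochner_Integration.integrable_bound[of _ "\<lambda>x. 2 * C * (wt x * indicator A x)"])
    show "integrable lebesgue (\<lambda>x. 2 * C * (wt x * indicator A x))" using wt_ind_int[OF that] by simp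
    show "(\<lambda>x. dr x * indicator A x) \<in> borel_measurable lebesgue" using drm that by measurable
    show "AE x in lebesgue. norm (dr x * indicator A x) \<le> norm (2 * C * (wt x * indicator A x))"
      using AEdr by eventually_elim (auto simp: indicator_def wt_nonneg C)
  qed
  have \<nu>dr: "\<nu> A = (\<integral>x. dr x * indicator A x \<partial>lebesgue)" if "A \<in> sets lebesgue" for A
  proof -
    have "ennreal (\<nu> A) = (\<integral>\<^sup>+x. ennreal (dr x * indicator A x) \<partial>lebesgue)"
      unfolding \<nu>d[OF that]
      by (rule nn_integral_cong_AE) (use AEdr in \<open>eventually_elim, auto simp: indicator_def\<close>)
    also have "\<dots> = ennreal (\<integral>x. dr x * indicator A x \<partial>lebesgue)"
      by (rule nn_integral_eq_integral[OF dri[OF that]]) (use AEdr in \<open>eventually_elim, auto simp: indicator_def\<close>)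
    finally show ?thesis
    proof (subst (asm) ennreal_inj)
      show "0 \<le> \<nu> A" by (rule \<nu>pos[OF that])
      show "0 \<le> (\<integral>x. dr x * indicator A x \<partial>lebesgue)"
        by (rule integral_nonneg_AE) (use AEdr in \<open>eventually_elim, auto simp: indicator_def\<close>)
    qed
  qed
  define h where "h x = (if 0 \<le> x then dr x / wt x - C else 0)" for x
  show ?thesis
  proof
    show "h \<in> borel_measurable lebesgue" unfolding h_def using drm by measurable
    show "AE x in lebesgue. \<bar>h x\<bar> \<le> C"
      using AEdr
    proof eventually_elim
      case (elim x)
      show ?case
      proof (cases "0 \<le> x")
        case True
        have w: "0 < wt x" using wt_pos[OF True] .
        have "0 \<le> dr x / wt x" using elim w by simp
        moreover have "dr x / wt x \<le> 2 * C" using elim w by (simp add: divide_le_eq)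
        ultimately show ?thesis using True by (simp add: h_def)
      qed (simp add: h_def C)
    qed
    fix A :: "real set" assume A: "A \<in> sets lebesgue"
    have "l A = \<nu> A - C * W A" by (simp add: \<nu>_def)
    also have "\<dots> = (\<integral>x. dr x * indicator A x \<partial>lebesgue) - (\<integral>x. C * (wt x * indicator A x) \<partial>lebesgue)"
      using \<nu>dr[OF A] by (simp add: W_def)
    also have "\<dots> = (\<integral>x. dr x * indicator A x - C * (wt x * indicator A x) \<partial>lebesgue)"
      using dri[OF A] wt_ind_int[OF A] by simp
    also have "\<dots> = (\<integral>x. h x * wt x * indicator A x \<partial>lebesgue)"
    proof (rule integral_cong_AE)
      show "(\<lambda>x. dr x * indicator A x - C * (wt x * indicator A x)) \<in> borel_measurable lebesgue"
        using drm A by measurable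
      show "(\<lambda>x. h x * wt x * indicator A x) \<in> borel_measurable lebesgue"
        unfolding h_def using drm A by measurable
      show "AE x in lebesgue. dr x * indicator A x - C * (wt x * indicator A x) = h x * wt x * indicator A x"
        using AEdr
      proof eventually_elim
        case (elim x)
        show ?case
        proof (cases "0 \<le> x")
          case True
          have w: "0 < wt x" using wt_pos[OF True] .
          then show ?thesis using True by (simp add: h_def field_simps)
        next
          case False
          then have "wt x = 0" by (simp add: wt_neg)
          then show ?thesis using elim False by (simp add: h_def)
        qed
      qed
    qed
    finally show "l A = (\<integral>x. h x * wt x * indicator A x \<partial>lebesgue)" .
  qed
qed


lemma repr_complex:
  fixes \<Lambda> :: "(real \<Rightarrow> complex) \<Rightarrow> complex" and C :: real
  assumes C: "0 \<le> C"
    and ladd: "\<And>g1 g2. integrable lebesgue g1 \<Longrightarrow> integrable lebesgue g2 \<Longrightarrow> \<Lambda> (\<lambda>x. g1 x + g2 x) = \<Lambda> g1 + \<Lambda> g2"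
    and lmult: "\<And>c g. integrable lebesgue g \<Longrightarrow> \<Lambda> (\<lambda>x. c * g x) = c * \<Lambda> g"
    and lbnd: "\<And>g. integrable lebesgue g \<Longrightarrow> norm (\<Lambda> g) \<le> C * (\<integral>x. norm (g x) \<partial>lebesgue)"
  obtains h where "h \<in> borel_measurable lebesgue" "AE x in lebesgue. norm (h x) \<le> 2 * C"
    "\<And>g. integrable lebesgue g \<Longrightarrow> (\<And>x. x < 0 \<Longrightarrow> g x = 0) \<Longrightarrow> \<Lambda> g = (\<integral>x. h x * g x \<partial>lebesgue)"
proof -
  define e where "e A = (\<lambda>x. complex_of_real (wt x * indicator A x))" for A :: "real set"
  have ei: "integrable lebesgue (e A)" if "A \<in> sets lebesgue" for A
    unfolding e_def by (rule integrable_of_real[OF wt_ind_int[OF that]])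
  have enorm: "(\<integral>x. norm (e A x) \<partial>lebesgue) = (\<integral>x. wt x * indicator A x \<partial>lebesgue)" for A
    unfolding e_def by (rule Bochner_Integration.integral_cong) (auto simp: wt_nonneg norm_mult indicator_def)
  have eadd: "e (A \<union> B) = (\<lambda>x. e A x + e B x)" if "A \<inter> B = {}" for A B
    using that by (auto simp: e_def fun_eq_iff indicator_def)
  define lR where "lR A = Re (\<Lambda> (e A))" for A
  define lI where "lI A = Im (\<Lambda> (e A))" for A
  have bR: "\<bar>lR A\<bar> \<le> C * (\<integral>x. wt x * indicator A x \<partial>lebesgue)" if "A \<in> sets lebesgue" for A
    using abs_Re_le_cmod[of "\<Lambda> (e A)"] lbnd[OF ei[OF that]] enorm[of A] by (simp add: lR_def)
  have bI: "\<bar>lI A\<bar> \<le> C * (\<integral>x. wt x * indicator A x \<partial>lebesgue)" if "A \<in> sets lebesgue" for A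
    using abs_Im_le_cmod[of "\<Lambda> (e A)"] lbnd[OF ei[OF that]] enorm[of A] by (simp add: lI_def)
  have aR: "lR (A \<union> B) = lR A + lR B"
    if "A \<in> sets lebesgue" "B \<in> sets lebesgue" "A \<inter> B = {}" for A B
    using ladd[OF ei[OF that(1)] ei[OF that(2)]] eadd[OF that(3)] by (simp add: lR_def)
  have aI: "lI (A \<union> B) = lI A + lI B"
    if "A \<in> sets lebesgue" "B \<in> sets lebesgue" "A \<inter> B = {}" for A B
    using ladd[OF ei[OF that(1)] ei[OF that(2)]] eadd[OF that(3)] by (simp add: lI_def)
  obtain hR where hR: "hR \<in> borel_measurable lebesgue" "AE x in lebesgue. \<bar>hR x\<bar> \<le> C"
    "\<And>A. A \<in> sets lebesgue \<Longrightarrow> lR A = (\<integral>x. hR x * wt x * indicator A x \<partial>lebesgue)"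
    using RN_real[OF C bR aR] by blast
  obtain hI where hI: "hI \<in> borel_measurable lebesgue" "AE x in lebesgue. \<bar>hI x\<bar> \<le> C"
    "\<And>A. A \<in> sets lebesgue \<Longrightarrow> lI A = (\<integral>x. hI x * wt x * indicator A x \<partial>lebesgue)"
    using RN_real[OF C bI aI] by blast
  define h where "h x = complex_of_real (hR x) + \<i> * complex_of_real (hI x)" for x
  have hm: "h \<in> borel_measurable lebesgue" unfolding h_def using hR(1) hI(1) by measurable
  have hb: "AE x in lebesgue. norm (h x) \<le> 2 * C"
    using hR(2) hI(2)
  proof eventually_elim
    case (elim x)
    have "norm (h x) \<le> norm (complex_of_real (hR x)) + norm (\<i> * complex_of_real (hI x))"
      unfolding h_def by (rule norm_triangle_ineq)
    also have "\<dots> = \<bar>hR x\<bar> + \<bar>hI x\<bar>" by (simp add: norm_mult)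
    finally show ?case using elim by simp
  qed
  have rint: "integrable lebesgue (\<lambda>x. r x * wt x * indicator A x)"
    if "r \<in> borel_measurable lebesgue" "AE x in lebesgue. \<bar>r x\<bar> \<le> C" "A \<in> sets lebesgue" for r A
  proof (rule Bochner_Integration.integrable_bound[of _ "\<lambda>x. C * (wt x * indicator A x)"])
    show "integrable lebesgue (\<lambda>x. C * (wt x * indicator A x))" using wt_ind_int[OF that(3)] by simp
    show "(\<lambda>x. r x * wt x * indicator A x) \<in> borel_measurable lebesgue" using that by measurable
    show "AE x in lebesgue. norm (r x * wt x * indicator A x) \<le> norm (C * (wt x * indicator A x))"
      using that(2) by eventually_elim
        (auto simp: indicator_def wt_nonneg abs_mult C intro!: mult_right_mono)
  qed
  have eb: "\<Lambda> (e A) = (\<integral>x. h x * e A x \<partial>lebesgue)" if A: "A \<in> sets lebesgue" for A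
  proof -
    have iR: "integrable lebesgue (\<lambda>x. hR x * wt x * indicator A x)" by (rule rint[OF hR(1,2) A])
    have iI: "integrable lebesgue (\<lambda>x. hI x * wt x * indicator A x)" by (rule rint[OF hI(1,2) A])
    have "(\<integral>x. h x * e A x \<partial>lebesgue) = (\<integral>x. complex_of_real (hR x * wt x * indicator A x)
        + \<i> * complex_of_real (hI x * wt x * indicator A x) \<partial>lebesgue)"
      by (rule Bochner_Integration.integral_cong) (auto simp: h_def e_def algebra_simps)
    also have "\<dots> = complex_of_real (\<integral>x. hR x * wt x * indicator A x \<partial>lebesgue)
        + \<i> * complex_of_real (\<integral>x. hI x * wt x * indicator A x \<partial>lebesgue)"
    proof -
      have j1: "integrable lebesgue (\<lambda>x. complex_of_real (hR x * wt x * indicator A x))"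
        by (rule integrable_of_real[OF iR])
      have j2: "integrable lebesgue (\<lambda>x. \<i> * complex_of_real (hI x * wt x * indicator A x))"
        by (rule integrable_mult_right[OF integrable_of_real[OF iI]])
      show ?thesis
        unfolding Bochner_Integration.integral_add[OF j1 j2] integral_mult_right_zero
          integral_complex_of_real ..
    qed
    also have "\<dots> = complex_of_real (lR A) + \<i> * complex_of_real (lI A)"
      using hR(3)[OF A] hI(3)[OF A] by simp
    also have "\<dots> = \<Lambda> (e A)" unfolding lR_def lI_def by (rule complex_eq[symmetric])
    finally show ?thesis by simp
  qed
  define M where "M = density lebesgue (\<lambda>x. ennreal (wt x))"
  have Mint: "integrable M \<phi> \<longleftrightarrow> integrable lebesgue (\<lambda>x. wt x *\<^sub>R \<phi> x)"
    if "\<phi> \<in> borel_measurable lebesgue" for \<phi> :: "real \<Rightarrow> complex"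
    unfolding M_def by (rule integrable_density[OF that wt_meas]) (simp add: wt_nonneg)
  have Mmeas: "\<phi> \<in> borel_measurable lebesgue" if "integrable M \<phi>" for \<phi> :: "real \<Rightarrow> complex"
    using borel_measurable_integrable[OF that] unfolding M_def by (simp add: measurable_density_eq1)
  have Mint2: "integrable lebesgue (\<lambda>x. wt x *\<^sub>R \<phi> x)" if "integrable M \<phi>" for \<phi> :: "real \<Rightarrow> complex"
    using Mint[OF Mmeas[OF that]] that by simp
  have hint: "integrable lebesgue (\<lambda>x. h x * g x)" if "integrable lebesgue g" for g
    by (rule integrable_bdd_mult[OF that hm hb])
  have P: "\<Lambda> (\<lambda>x. wt x *\<^sub>R \<phi> x) = (\<integral>x. h x * (wt x *\<^sub>R \<phi> x) \<partial>lebesgue)" if "integrable M \<phi>" for \<phi>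
    using that
  proof (induct rule: integrable_induct)
    case (base A c)
    then have A: "A \<in> sets lebesgue" by (simp add: M_def)
    have eq: "(\<lambda>x. wt x *\<^sub>R (indicator A x *\<^sub>R c)) = (\<lambda>x. c * e A x)"
      by (auto simp: e_def fun_eq_iff scaleR_conv_of_real indicator_def)
    have eq3: "(\<lambda>x. h x * (wt x *\<^sub>R (indicator A x *\<^sub>R c))) = (\<lambda>x. c * (h x * e A x))"
    proof
      fix x show "h x * (wt x *\<^sub>R (indicator A x *\<^sub>R c)) = c * (h x * e A x)"
        by (simp add: e_def scaleR_conv_of_real indicator_def)
    qed
    have "\<Lambda> (\<lambda>x. wt x *\<^sub>R (indicator A x *\<^sub>R c)) = c * (\<integral>x. h x * e A x \<partial>lebesgue)"
      unfolding eq lmult[OF ei[OF A]] eb[OF A] ..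
    also have "\<dots> = (\<integral>x. h x * (wt x *\<^sub>R (indicator A x *\<^sub>R c)) \<partial>lebesgue)"
      unfolding eq3 integral_mult_right_zero ..
    finally show ?case .
  next
    case (add f g)
    have eq: "(\<lambda>x. wt x *\<^sub>R (f x + g x)) = (\<lambda>x. wt x *\<^sub>R f x + wt x *\<^sub>R g x)"
      by (simp add: fun_eq_iff scaleR_add_right)
    have eq2: "(\<lambda>x. h x * (wt x *\<^sub>R (f x + g x))) = (\<lambda>x. h x * (wt x *\<^sub>R f x) + h x * (wt x *\<^sub>R g x))"
      by (simp add: fun_eq_iff distrib_left scaleR_add_right)
    have "\<Lambda> (\<lambda>x. wt x *\<^sub>R (f x + g x)) = \<Lambda> (\<lambda>x. wt x *\<^sub>R f x) + \<Lambda> (\<lambda>x. wt x *\<^sub>R g x)"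
      unfolding eq by (rule ladd[OF Mint2[OF add(1)] Mint2[OF add(3)]])
    also have "\<dots> = (\<integral>x. h x * (wt x *\<^sub>R f x) \<partial>lebesgue) + (\<integral>x. h x * (wt x *\<^sub>R g x) \<partial>lebesgue)"
      using add(2) add(4) by simp
    also have "\<dots> = (\<integral>x. h x * (wt x *\<^sub>R f x) + h x * (wt x *\<^sub>R g x) \<partial>lebesgue)"
      by (rule Bochner_Integration.integral_add[symmetric, OF hint[OF Mint2[OF add(1)]] hint[OF Mint2[OF add(3)]]])
    also have "\<dots> = (\<integral>x. h x * (wt x *\<^sub>R (f x + g x)) \<partial>lebesgue)"
      unfolding eq2[symmetric] ..
    finally show ?case .
  next
    case (lim f s)
    define a where "a i = (\<lambda>x. wt x *\<^sub>R s i x)" for i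
    define b where "b = (\<lambda>x. wt x *\<^sub>R f x)"
    have ai: "integrable lebesgue (a i)" for i unfolding a_def by (rule Mint2[OF lim(1)])
    have bi: "integrable lebesgue b" unfolding b_def by (rule Mint2[OF lim(5)])
    have fw: "integrable lebesgue (\<lambda>x. wt x * norm (f x))"
      using integrable_norm[OF bi] by (simp add: b_def wt_nonneg)
    have pt: "(\<lambda>i. s i x) \<longlonglongrightarrow> f x" for x using lim(3)[of x] by (simp add: M_def)
    have sb: "norm (s i x) \<le> 2 * norm (f x)" for i x using lim(4)[of x i] by (simp add: M_def)
    have D: "(\<lambda>i. \<integral>x. norm (a i x - b x) \<partial>lebesgue) \<longlonglongrightarrow> (\<integral>x. (0::real) \<partial>(lebesgue::real measure))"
    proof (rule integral_dominated_convergence[where w="\<lambda>x. 3 * (wt x * norm (f x))"])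
      show "integrable lebesgue (\<lambda>x. 3 * (wt x * norm (f x)))" using fw by simp
      show "(\<lambda>x. 0::real) \<in> borel_measurable lebesgue" by simp
      show "(\<lambda>x. norm (a i x - b x)) \<in> borel_measurable lebesgue" for i
        using ai bi by (simp add: borel_measurable_integrable)
      show "AE x in lebesgue. (\<lambda>i. norm (a i x - b x)) \<longlonglongrightarrow> 0"
      proof (rule AE_I2)
        fix x
        have "(\<lambda>i. a i x - b x) \<longlonglongrightarrow> wt x *\<^sub>R f x - b x"
          unfolding a_def by (intro tendsto_diff tendsto_scaleR tendsto_const pt)
        then show "(\<lambda>i. norm (a i x - b x)) \<longlonglongrightarrow> 0"
          by (simp add: b_def tendsto_norm_zero_iff)
      qed
      show "AE x in lebesgue. norm (norm (a i x - b x)) \<le> 3 * (wt x * norm (f x))" for i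
      proof (rule AE_I2)
        fix x
        have "norm (a i x - b x) = wt x * norm (s i x - f x)"
          by (simp add: a_def b_def scaleR_diff_right[symmetric] wt_nonneg)
        also have "\<dots> \<le> wt x * (norm (s i x) + norm (f x))"
          by (intro mult_left_mono norm_triangle_ineq4 wt_nonneg)
        also have "\<dots> \<le> wt x * (3 * norm (f x))"
          using sb[of i x] by (intro mult_left_mono wt_nonneg) simp
        finally show "norm (norm (a i x - b x)) \<le> 3 * (wt x * norm (f x))" by simp
      qed
    qed
    have L1: "(\<lambda>i. \<Lambda> (a i)) \<longlonglongrightarrow> \<Lambda> b"
    proof -
      have dif: "\<Lambda> (a i) - \<Lambda> b = \<Lambda> (\<lambda>x. a i x - b x)" for i
      proof -
        have "\<Lambda> (\<lambda>x. (a i x - b x) + b x) = \<Lambda> (\<lambda>x. a i x - b x) + \<Lambda> b"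
          by (rule ladd) (use ai bi in auto)
        then show ?thesis by simp
      qed
      have "(\<lambda>i. \<Lambda> (a i) - \<Lambda> b) \<longlonglongrightarrow> 0"
      proof (rule Lim_null_comparison)
        show "eventually (\<lambda>i. norm (\<Lambda> (a i) - \<Lambda> b) \<le> C * (\<integral>x. norm (a i x - b x) \<partial>lebesgue)) sequentially"
          unfolding dif by (intro always_eventually allI lbnd) (use ai bi in auto)
        show "(\<lambda>i. C * (\<integral>x. norm (a i x - b x) \<partial>lebesgue)) \<longlonglongrightarrow> 0"
          using tendsto_mult[OF tendsto_const D, of C] by simp
      qed
      then show ?thesis by (simp add: LIM_zero_iff)
    qed
    have L2: "(\<lambda>i. \<integral>x. h x * a i x \<partial>lebesgue) \<longlonglongrightarrow> (\<integral>x. h x * b x \<partial>lebesgue)"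
    proof (rule integral_dominated_convergence[where w="\<lambda>x. 2 * C * (2 * (wt x * norm (f x)))"])
      show "integrable lebesgue (\<lambda>x. 2 * C * (2 * (wt x * norm (f x))))" using fw by simp
      show "(\<lambda>x. h x * b x) \<in> borel_measurable lebesgue" using hint[OF bi] by (simp add: borel_measurable_integrable)
      show "(\<lambda>x. h x * a i x) \<in> borel_measurable lebesgue" for i using hint[OF ai] by (simp add: borel_measurable_integrable)
      show "AE x in lebesgue. (\<lambda>i. h x * a i x) \<longlonglongrightarrow> h x * b x"
        unfolding a_def b_def by (intro AE_I2 tendsto_mult tendsto_const tendsto_scaleR pt)
      show "AE x in lebesgue. norm (h x * a i x) \<le> 2 * C * (2 * (wt x * norm (f x)))" for i
        using hb
      proof eventually_elim
        case (elim x)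
        have "norm (h x * a i x) = norm (h x) * (wt x * norm (s i x))"
          by (simp add: a_def norm_mult wt_nonneg)
        also have "\<dots> \<le> 2 * C * (wt x * (2 * norm (f x)))"
          using elim sb[of i x] by (intro mult_mono mult_left_mono wt_nonneg) (auto simp: C wt_nonneg)
        finally show ?case by simp
      qed
    qed
    have "(\<lambda>i. \<Lambda> (a i)) = (\<lambda>i. \<integral>x. h x * a i x \<partial>lebesgue)"
      using lim(2) by (simp add: a_def)
    with L1 L2 have "\<Lambda> b = (\<integral>x. h x * b x \<partial>lebesgue)" using LIMSEQ_unique by metis
    then show ?case by (simp add: b_def)
  qed
  show ?thesis
  proof (rule that[OF hm hb])
    fix g :: "real \<Rightarrow> complex" assume g: "integrable lebesgue g" and g0: "\<And>x. x < 0 \<Longrightarrow> g x = 0"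
    define \<phi> where "\<phi> x = exp x *\<^sub>R g x" for x
    have eq: "(\<lambda>x. wt x *\<^sub>R \<phi> x) = g"
    proof
      fix x show "wt x *\<^sub>R \<phi> x = g x"
        by (cases "0 \<le> x") (auto simp: wt_def \<phi>_def g0 exp_minus field_simps)
    qed
    have \<phi>m: "\<phi> \<in> borel_measurable lebesgue"
      unfolding \<phi>_def using borel_measurable_integrable[OF g] by measurable
    have iM: "integrable M \<phi>" using Mint[OF \<phi>m] g eq by simp
    have eqx: "wt x *\<^sub>R \<phi> x = g x" for x using eq by (simp add: fun_eq_iff)
    from P[OF iM] show "\<Lambda> g = (\<integral>x. h x * g x \<partial>lebesgue)" unfolding eqx by (simp add: eq)
  qed
qed


lemma uf_lim:
  fixes \<phi> :: "'a \<Rightarrow> complex"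
  assumes F: "uf F" and B: "eventually (\<lambda>s. norm (\<phi> s) \<le> B) F"
  shows "\<exists>L. (\<phi> \<longlongrightarrow> L) F"
proof -
  have Fb: "F \<noteq> bot" using F by (simp add: uf_def)
  let ?G = "filtermap \<phi> F"
  have Gb: "?G \<noteq> bot" using Fb by (simp add: filtermap_bot_iff)
  have "eventually (\<lambda>x. x \<in> cball 0 B) ?G" using B by (simp add: eventually_filtermap)
  then obtain L where L: "inf (nhds L) ?G \<noteq> bot"
    using compact_filter[THEN iffD1, OF compact_cball, rule_format, OF Gb] by blast
  have "(\<phi> \<longlongrightarrow> L) F"
    unfolding tendsto_def
  proof (intro allI impI)
    fix S :: "complex set" assume S: "open S" "L \<in> S"
    show "eventually (\<lambda>s. \<phi> s \<in> S) F"
    proof (rule ccontr)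
      assume "\<not> eventually (\<lambda>s. \<phi> s \<in> S) F"
      then have "eventually (\<lambda>s. \<phi> s \<notin> S) F" using F by (auto simp: uf_def)
      then have e1: "eventually (\<lambda>x. x \<notin> S) ?G" by (simp add: eventually_filtermap)
      have e2: "eventually (\<lambda>x. x \<in> S) (nhds L)" using S by (rule eventually_nhds_in_open)
      have "eventually (\<lambda>x. False) (inf (nhds L) ?G)"
        unfolding eventually_inf using e1 e2 by blast
      then show False using L by (simp add: trivial_limit_def)
    qed
  qed
  then show ?thesis ..
qed

lemma exists_weak_lim:
  assumes f: "f \<in> Linf_Rp" and F: "uf F" "eventually (\<lambda>s. 0 \<le> s) F"
  shows "\<exists>h. h \<in> Linf_Rp \<and> (\<forall>g\<in>L1_Rp. ((\<lambda>s. pair_shift f g s) \<longlongrightarrow> (LINT x:{0..}|lebesgue. h x * g x)) F)"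
proof -
  have Fb: "F \<noteq> bot" using F by (simp add: uf_def)
  obtain C where C: "C > 0" "AE x in lebesgue. norm (F0 f x) \<le> C" using Linf_bound[OF f] .
  define \<Lambda> where "\<Lambda> g = Lim F (PS f g)" for g
  have lim: "(PS f g \<longlongrightarrow> \<Lambda> g) F" if g: "integrable lebesgue g" for g
  proof -
    obtain L where L: "(PS f g \<longlongrightarrow> L) F"
      using uf_lim[OF F(1), of "PS f g" "C * (\<integral>x. norm (g x) \<partial>lebesgue)"]
        PS_bound[OF f C(2) g] by (auto intro: always_eventually)
    then show ?thesis using tendsto_Lim[OF Fb L] by (simp add: \<Lambda>_def)
  qed
  have ladd: "\<Lambda> (\<lambda>x. g1 x + g2 x) = \<Lambda> g1 + \<Lambda> g2"
    if "integrable lebesgue g1" "integrable lebesgue g2" for g1 g2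
  proof -
    have "((\<lambda>s. PS f g1 s + PS f g2 s) \<longlongrightarrow> \<Lambda> g1 + \<Lambda> g2) F"
      by (intro tendsto_add lim that)
    moreover have "(\<lambda>s. PS f g1 s + PS f g2 s) = PS f (\<lambda>x. g1 x + g2 x)"
      using PS_add[OF f that] by (simp add: fun_eq_iff)
    ultimately show ?thesis using lim[of "\<lambda>x. g1 x + g2 x"] that tendsto_unique[OF Fb] by force
  qed
  have lmult: "\<Lambda> (\<lambda>x. c * g x) = c * \<Lambda> g" if "integrable lebesgue g" for c g
  proof -
    have "((\<lambda>s. c * PS f g s) \<longlongrightarrow> c * \<Lambda> g) F"
      by (intro tendsto_mult tendsto_const lim that)
    moreover have "(\<lambda>s. c * PS f g s) = PS f (\<lambda>x. c * g x)"
      by (simp add: fun_eq_iff PS_mult)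
    ultimately show ?thesis using lim[of "\<lambda>x. c * g x"] that tendsto_unique[OF Fb] by force
  qed
  have lbnd: "norm (\<Lambda> g) \<le> C * (\<integral>x. norm (g x) \<partial>lebesgue)" if g: "integrable lebesgue g" for g
  proof (rule tendsto_upperbound[OF tendsto_norm[OF lim[OF g]] _ Fb])
    show "\<forall>\<^sub>F s in F. norm (PS f g s) \<le> C * (\<integral>x. norm (g x) \<partial>lebesgue)"
      using PS_bound[OF f C(2) g] by (auto intro: always_eventually)
  qed
  obtain h where h: "h \<in> borel_measurable lebesgue" "AE x in lebesgue. norm (h x) \<le> 2 * C"
    "\<And>g. integrable lebesgue g \<Longrightarrow> (\<And>x. x < 0 \<Longrightarrow> g x = 0) \<Longrightarrow> \<Lambda> g = (\<integral>x. h x * g x \<partial>lebesgue)"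
    using repr_complex[of C \<Lambda>] C(1) ladd lmult lbnd by auto
  have hL: "h \<in> Linf_Rp"
    unfolding Linf_Rp_def set_borel_measurable_def using h(1,2)
    by (auto intro!: exI[of _ "2 * C"] elim: eventually_mono)
  show ?thesis
  proof (intro exI conjI ballI)
    show "h \<in> Linf_Rp" by fact
    fix g assume g: "g \<in> L1_Rp"
    then have gi: "integrable lebesgue (F0 g)" by (simp add: L1_Rp_iff)
    have "(PS f (F0 g) \<longlongrightarrow> \<Lambda> (F0 g)) F" by (rule lim[OF gi])
    moreover have "\<Lambda> (F0 g) = (LINT x:{0..}|lebesgue. h x * g x)"
    proof -
      have "\<Lambda> (F0 g) = (\<integral>x. h x * F0 g x \<partial>lebesgue)"
        by (rule h(3)[OF gi]) (rule F0_simps(2))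
      also have "\<dots> = (LINT x:{0..}|lebesgue. h x * g x)"
        unfolding set_lebesgue_integral_def
        by (rule Bochner_Integration.integral_cong) (auto simp: F0_def indicator_def)
      finally show ?thesis .
    qed
    ultimately have T: "(PS f (F0 g) \<longlongrightarrow> (LINT x:{0..}|lebesgue. h x * g x)) F" by simp
    have E: "eventually (\<lambda>s. PS f (F0 g) s = pair_shift f g s) F"
      using F(2) by eventually_elim (simp add: pair_shift_PS)
    show "((\<lambda>s. pair_shift f g s) \<longlongrightarrow> (LINT x:{0..}|lebesgue. h x * g x)) F"
      using iffD1[OF tendsto_cong[OF E] T] .
  qed
qed

lemma weak_lim_unique:
  assumes Fb: "F \<noteq> bot" and h1: "h1 \<in> Linf_Rp" and h2: "h2 \<in> Linf_Rp"
    and l1: "\<forall>g\<in>L1_Rp. ((\<lambda>s. pair_shift f g s) \<longlongrightarrow> (LINT x:{0..}|lebesgue. h1 x * g x)) F"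
    and l2: "\<forall>g\<in>L1_Rp. ((\<lambda>s. pair_shift f g s) \<longlongrightarrow> (LINT x:{0..}|lebesgue. h2 x * g x)) F"
  shows "AE x in lebesgue. 0 \<le> x \<longrightarrow> h1 x = h2 x"
proof -
  have eq: "(LINT x:{0..}|lebesgue. h1 x * g x) = (LINT x:{0..}|lebesgue. h2 x * g x)" if "g \<in> L1_Rp" for g
    using tendsto_unique[OF Fb] l1 l2 that by blast
  obtain C1 where C1: "C1 > 0" "AE x in lebesgue. norm (F0 h1 x) \<le> C1" using Linf_bound[OF h1] .
  obtain C2 where C2: "C2 > 0" "AE x in lebesgue. norm (F0 h2 x) \<le> C2" using Linf_bound[OF h2] .
  define d where "d x = F0 h1 x - F0 h2 x" for x
  have dm: "d \<in> borel_measurable lebesgue" unfolding d_def using Linf_meas[OF h1] Linf_meas[OF h2] by simp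
  have db: "AE x in lebesgue. norm (d x) \<le> C1 + C2"
    using C1(2) C2(2) by eventually_elim (auto simp: d_def intro: order_trans[OF norm_triangle_ineq4])
  have AEn: "AE x in lebesgue. x \<in> {0..real n} \<longrightarrow> d x = 0" for n :: nat
  proof -
    define gn where "gn x = indicator {0..real n} x *\<^sub>R cnj (d x)" for x
    have cm: "(\<lambda>x. cnj (d x)) \<in> borel_measurable lebesgue"
      by (rule borel_measurable_continuous_on[OF _ dm]) (intro continuous_intros)
    have gnm: "gn \<in> borel_measurable lebesgue" unfolding gn_def using cm by measurable
    have Ii: "integrable lebesgue (indicat_real {0..real n})"
      by (simp add: lmeasurable_iff_integrable[symmetric])
    have gni: "integrable lebesgue gn"
    proof (rule Bochner_Integration.integrable_bound[OF _ gnm])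
      show "integrable lebesgue (\<lambda>x. (C1 + C2) * indicat_real {0..real n} x)" using Ii by simp
      show "AE x in lebesgue. norm (gn x) \<le> norm ((C1 + C2) * indicat_real {0..real n} x)"
        using db by eventually_elim (insert C1(1) C2(1), auto simp: gn_def indicator_def)
    qed
    have F0gn: "F0 gn = gn" by (auto simp: fun_eq_iff F0_def gn_def indicator_def)
    have gnL: "gn \<in> L1_Rp" using gni by (simp add: L1_Rp_iff F0gn)
    have p1: "integrable lebesgue (\<lambda>x. F0 h1 x * gn x)"
      by (rule integrable_bdd_mult[OF gni Linf_meas[OF h1] C1(2)])
    have p2: "integrable lebesgue (\<lambda>x. F0 h2 x * gn x)"
      by (rule integrable_bdd_mult[OF gni Linf_meas[OF h2] C2(2)])
    have s1: "(LINT x:{0..}|lebesgue. h1 x * gn x) = (\<integral>x. F0 h1 x * gn x \<partial>lebesgue)"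
      unfolding set_lebesgue_integral_def
      by (rule Bochner_Integration.integral_cong) (auto simp: F0_def gn_def indicator_def)
    have s2: "(LINT x:{0..}|lebesgue. h2 x * gn x) = (\<integral>x. F0 h2 x * gn x \<partial>lebesgue)"
      unfolding set_lebesgue_integral_def
      by (rule Bochner_Integration.integral_cong) (auto simp: F0_def gn_def indicator_def)
    have "0 = (\<integral>x. F0 h1 x * gn x \<partial>lebesgue) - (\<integral>x. F0 h2 x * gn x \<partial>lebesgue)"
      using eq[OF gnL] s1 s2 by simp
    also have "\<dots> = (\<integral>x. d x * gn x \<partial>lebesgue)"
      using p1 p2 by (simp add: d_def left_diff_distrib)
    also have "\<dots> = (\<integral>x. complex_of_real (indicator {0..real n} x * (norm (d x))\<^sup>2) \<partial>lebesgue)"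
      by (rule Bochner_Integration.integral_cong)
         (auto simp: gn_def indicator_def complex_norm_square[symmetric] simp del: of_real_power)
    also have "\<dots> = complex_of_real (\<integral>x. indicator {0..real n} x * (norm (d x))\<^sup>2 \<partial>lebesgue)"
      by (rule integral_complex_of_real)
    finally have z: "(\<integral>x. indicator {0..real n} x * (norm (d x))\<^sup>2 \<partial>lebesgue) = 0" by simp
    have ri: "integrable lebesgue (\<lambda>x. indicator {0..real n} x * (norm (d x))\<^sup>2)"
    proof -
      have "integrable lebesgue (\<lambda>x. d x * gn x)" using p1 p2 by (simp add: d_def left_diff_distrib)
      then have "integrable lebesgue (\<lambda>x. norm (d x * gn x))" by simp
      moreover have "(\<lambda>x. norm (d x * gn x)) = (\<lambda>x. indicator {0..real n} x * (norm (d x))\<^sup>2)"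
        by (auto simp: fun_eq_iff gn_def indicator_def norm_mult power2_eq_square)
      ultimately show ?thesis by simp
    qed
    have "AE x in lebesgue. indicator {0..real n} x * (norm (d x))\<^sup>2 = 0"
      using integral_nonneg_eq_0_iff_AE[OF ri] z by simp
    then show ?thesis by eventually_elim (auto simp: indicator_def)
  qed
  have "AE x in lebesgue. \<forall>n::nat. x \<in> {0..real n} \<longrightarrow> d x = 0"
    unfolding AE_all_countable using AEn by blast
  then show ?thesis
  proof eventually_elim
    case (elim x)
    show ?case
    proof
      assume x: "0 \<le> x"
      have "x \<in> {0..real (nat \<lceil>x\<rceil>)}" using x by auto
      then have "d x = 0" using elim by blast
      then show "h1 x = h2 x" using x by (simp add: d_def F0_def)
    qed
  qed
qed


lemma omega_lim_exists:
  assumes f: "f \<in> Linf_Rp" and w: "\<omega> \<in> OmegaStar"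
  shows "is_omega_lim f \<omega> (f_omega_Rp f \<omega>)"
proof -
  have "\<exists>h. is_omega_lim f \<omega> h"
    using exists_weak_lim[OF f omega_filter_props(2)[OF w] omega_filter_props(4)[OF w]]
    by (auto simp: is_omega_lim_def)
  then show ?thesis unfolding f_omega_Rp_def by (rule someI_ex)
qed

lemma const_Linf: "(\<lambda>_. \<alpha>) \<in> Linf_Rp"
  unfolding Linf_Rp_def set_borel_measurable_def by (auto intro!: exI[of _ "norm \<alpha>"])

lemma const_lim:
  assumes K: "K_is f \<alpha>" and w: "\<omega> \<in> OmegaStar"
  shows "is_omega_lim f \<omega> (\<lambda>_. \<alpha>)"
  unfolding is_omega_lim_def
proof (intro conjI ballI const_Linf)
  fix g assume g: "g \<in> L1_Rp"
  have "((\<lambda>s. pair_shift f g s) \<longlongrightarrow> \<alpha> * (LINT x:{0..}|lebesgue. g x)) at_top"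
    using K g by (simp add: K_is_def)
  then have "((\<lambda>s. pair_shift f g s) \<longlongrightarrow> \<alpha> * (LINT x:{0..}|lebesgue. g x)) (omega_filter \<omega>)"
    by (rule tendsto_mono[OF omega_filter_props(3)[OF w]])
  then show "((\<lambda>s. pair_shift f g s) \<longlongrightarrow> (LINT x:{0..}|lebesgue. \<alpha> * g x)) (omega_filter \<omega>)"
    by (simp add: set_integral_mult_right)
qed

lemma forward_Rp:
  assumes f: "f \<in> Linf_Rp" and K: "K_is f \<alpha>" and w: "\<rho> \<in> OmegaStar"
  shows "AE x in lebesgue. 0 \<le> x \<longrightarrow> f_omega_Rp f \<rho> x = \<alpha>"
proof -
  have l1: "is_omega_lim f \<rho> (f_omega_Rp f \<rho>)" by (rule omega_lim_exists[OF f w])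
  have l2: "is_omega_lim f \<rho> (\<lambda>_. \<alpha>)" by (rule const_lim[OF K w])
  show ?thesis
    using weak_lim_unique[OF omega_filter_props(1)[OF w], of "f_omega_Rp f \<rho>" "\<lambda>_. \<alpha>" f] l1 l2
    by (simp add: is_omega_lim_def)
qed

lemma forward:
  assumes f: "f \<in> Linf_Rp" and K: "K_is f \<alpha>" and w: "\<omega> \<in> OmegaStar"
  shows "AE x in lebesgue. f_omega f \<omega> x = \<alpha>"
proof -
  have A0: "AE x in lebesgue. 0 \<le> x \<longrightarrow> f_omega_Rp f \<omega> x = \<alpha>" by (rule forward_Rp[OF f K w])
  have AN: "AE x in lebesgue. 0 \<le> x + real (Suc N) \<longrightarrow> f_omega_Rp f (flow (- real (Suc N)) \<omega>) (x + real (Suc N)) = \<alpha>" for N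
    using AE_translate[OF forward_Rp[OF f K flow_OmegaStar[OF w, of "- real (Suc N)"]], of "real (Suc N)"] by simp
  have "AE x in lebesgue. \<forall>N. 0 \<le> x + real (Suc N) \<longrightarrow> f_omega_Rp f (flow (- real (Suc N)) \<omega>) (x + real (Suc N)) = \<alpha>"
    unfolding AE_all_countable using AN by blast
  with A0 show ?thesis
  proof eventually_elim
    case (elim x)
    show ?case
    proof (cases "0 \<le> x")
      case True
      then show ?thesis using elim by (simp add: f_omega_def)
    next
      case False
      define N where "N = nat \<lceil>- x\<rceil> - 1"
      have c: "\<lceil>- x\<rceil> = int (Suc N)" using False by (simp add: N_def)
      have c2: "of_int \<lceil>- x\<rceil> = real (Suc N)" using c by simp
      have "0 \<le> x + real (Suc N)" using c2 by (metis add.commute le_of_int_ceiling neg_le_iff_le add_le_cancel_left diff_ge_0_iff_ge diff_minus_eq_add minus_minus)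
      then have "f_omega_Rp f (flow (- real (Suc N)) \<omega>) (x + real (Suc N)) = \<alpha>" using elim by blast
      then show ?thesis using False c2 by (simp add: f_omega_def Let_def add.commute)
    qed
  qed
qed

definition shr :: "real \<Rightarrow> (real \<Rightarrow> complex) \<Rightarrow> real \<Rightarrow> complex" where
  "shr d g x = (if d \<le> x then g (x - d) else 0)"

lemma F0_shr: "0 \<le> d \<Longrightarrow> F0 (shr d g) = (\<lambda>x. F0 g (x + (- d)))"
  by (auto simp: fun_eq_iff F0_def shr_def indicator_def)

lemma shr_L1: "0 \<le> d \<Longrightarrow> g \<in> L1_Rp \<Longrightarrow> shr d g \<in> L1_Rp"
  using integrable_translate[of "F0 g" "- d"] by (simp add: L1_Rp_iff F0_shr)

lemma shr_int: "0 \<le> d \<Longrightarrow> (LINT x:{0..}|lebesgue. shr d g x) = (LINT x:{0..}|lebesgue. g x)"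
  using integral_translate[of "F0 g" "- d"] by (simp add: set_integral_F0 F0_shr)

lemma pair_shift_shr:
  assumes "0 \<le> d" "0 \<le> s"
  shows "pair_shift f (shr d g) s = pair_shift f g (s + d)"
proof -
  have "pair_shift f (shr d g) s = (\<integral>x. F0 f (x + s) * F0 g (x + - d) \<partial>lebesgue)"
    using assms by (simp add: pair_shift_PS PS_def F0_shr)
  also have "\<dots> = (\<integral>x. F0 f ((x + - d) + (s + d)) * F0 g (x + - d) \<partial>lebesgue)" by (simp add: algebra_simps)
  also have "\<dots> = (\<integral>x. F0 f (x + (s + d)) * F0 g x \<partial>lebesgue)"
    by (rule integral_translate[of "\<lambda>y. F0 f (y + (s + d)) * F0 g y"])
  also have "\<dots> = pair_shift f g (s + d)" using assms by (simp add: pair_shift_PS PS_def)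
  finally show ?thesis .
qed

lemma tendsto_flow_shr:
  assumes w: "\<omega> \<in> OmegaStar" and d: "0 \<le> d"
  shows "((\<lambda>s. pair_shift f g s) \<longlongrightarrow> L) (omega_filter (flow d \<omega>))
     \<longleftrightarrow> ((\<lambda>s. pair_shift f (shr d g) s) \<longlongrightarrow> L) (omega_filter \<omega>)"
proof -
  have "((\<lambda>s. pair_shift f g s) \<longlongrightarrow> L) (omega_filter (flow d \<omega>))
      \<longleftrightarrow> ((\<lambda>s. pair_shift f g (s + d)) \<longlongrightarrow> L) (omega_filter \<omega>)"
    unfolding omega_filter_flow[OF w] filterlim_filtermap ..
  also have "\<dots> \<longleftrightarrow> ((\<lambda>s. pair_shift f (shr d g) s) \<longlongrightarrow> L) (omega_filter \<omega>)"
  proof (rule tendsto_cong)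
    show "eventually (\<lambda>s. pair_shift f g (s + d) = pair_shift f (shr d g) s) (omega_filter \<omega>)"
      using omega_filter_props(4)[OF w] by eventually_elim (simp add: pair_shift_shr[OF d])
  qed
  finally show ?thesis .
qed

lemma AE_lim:
  assumes f: "f \<in> Linf_Rp" and w: "\<rho> \<in> OmegaStar"
    and AE: "AE y in lebesgue. y \<in> S \<longrightarrow> f_omega_Rp f \<rho> y = \<alpha>"
    and k: "k \<in> L1_Rp" and kS: "\<And>x. 0 \<le> x \<Longrightarrow> x \<notin> S \<Longrightarrow> k x = 0"
  shows "((\<lambda>s. pair_shift f k s) \<longlongrightarrow> \<alpha> * (LINT x:{0..}|lebesgue. k x)) (omega_filter \<rho>)"
proof -
  let ?h = "f_omega_Rp f \<rho>"
  have l: "is_omega_lim f \<rho> ?h" by (rule omega_lim_exists[OF f w])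
  then have hL: "?h \<in> Linf_Rp" and T: "((\<lambda>s. pair_shift f k s) \<longlongrightarrow> (LINT x:{0..}|lebesgue. ?h x * k x)) (omega_filter \<rho>)"
    using k by (auto simp: is_omega_lim_def)
  have ki: "integrable lebesgue (F0 k)" using k by (simp add: L1_Rp_iff)
  have "(LINT x:{0..}|lebesgue. ?h x * k x) = (\<integral>x. F0 ?h x * F0 k x \<partial>lebesgue)"
    unfolding set_lebesgue_integral_def
    by (rule Bochner_Integration.integral_cong) (auto simp: F0_def indicator_def)
  also have "\<dots> = (\<integral>x. \<alpha> * F0 k x \<partial>lebesgue)"
  proof (rule integral_cong_AE)
    show "(\<lambda>x. F0 ?h x * F0 k x) \<in> borel_measurable lebesgue"
      using Linf_meas[OF hL] borel_measurable_integrable[OF ki] by simp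
    show "(\<lambda>x. \<alpha> * F0 k x) \<in> borel_measurable lebesgue"
      using borel_measurable_integrable[OF ki] by simp
    show "AE x in lebesgue. F0 ?h x * F0 k x = \<alpha> * F0 k x"
      using AE by eventually_elim (auto simp: F0_def indicator_def kS)
  qed
  also have "\<dots> = \<alpha> * (LINT x:{0..}|lebesgue. k x)" by (simp add: set_integral_F0)
  finally show ?thesis using T by simp
qed

lemma decomp_L1:
  assumes k: "k \<in> L1_Rp"
  shows "(\<lambda>x. if x < 1 then k x else 0) \<in> L1_Rp" "(\<lambda>x. k (x + 1)) \<in> L1_Rp"
    "k = (\<lambda>x. (if x < 1 then k x else 0) + shr 1 (\<lambda>x. k (x + 1)) x)"
proof -
  have ki: "integrable lebesgue (F0 k)" using k by (simp add: L1_Rp_iff)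
  have "F0 (\<lambda>x. if x < 1 then k x else 0) = (\<lambda>x. indicator {..<1} x *\<^sub>R F0 k x)"
    by (auto simp: fun_eq_iff F0_def indicator_def)
  then show "(\<lambda>x. if x < 1 then k x else 0) \<in> L1_Rp"
    using integrable_mult_indicator[OF _ ki, of "{..<1}"] by (simp add: L1_Rp_iff)
  have "F0 (\<lambda>x. k (x + 1)) = (\<lambda>x. indicator {0..} x *\<^sub>R F0 k (x + 1))"
    by (auto simp: fun_eq_iff F0_def indicator_def)
  moreover have "integrable lebesgue (\<lambda>x. F0 k (x + 1))" using ki by (simp add: integrable_translate)
  ultimately show "(\<lambda>x. k (x + 1)) \<in> L1_Rp"
    using integrable_mult_indicator[of "{0..}" lebesgue "\<lambda>x. F0 k (x + 1)"] by (simp add: L1_Rp_iff)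
  show "k = (\<lambda>x. (if x < 1 then k x else 0) + shr 1 (\<lambda>x. k (x + 1)) x)"
    by (auto simp: fun_eq_iff shr_def)
qed

lemma pair_shift_add:
  assumes f: "f \<in> Linf_Rp" and g1: "g1 \<in> L1_Rp" and g2: "g2 \<in> L1_Rp" and s: "0 \<le> s"
  shows "pair_shift f (\<lambda>x. g1 x + g2 x) s = pair_shift f g1 s + pair_shift f g2 s"
proof -
  have "F0 (\<lambda>x. g1 x + g2 x) = (\<lambda>x. F0 g1 x + F0 g2 x)" by (auto simp: fun_eq_iff F0_def scaleR_add_right)
  then show ?thesis using s PS_add[OF f, of "F0 g1" "F0 g2" s] g1 g2 by (simp add: pair_shift_PS L1_Rp_iff)
qed

lemma set_int_add:
  assumes g1: "g1 \<in> L1_Rp" and g2: "g2 \<in> L1_Rp"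
  shows "(LINT x:{0..}|lebesgue. g1 x + g2 x) = (LINT x:{0..}|lebesgue. g1 x) + (LINT x:{0..}|lebesgue. g2 x)"
  using g1 g2 by (simp add: L1_Rp_def set_integral_add)

lemma back_induct:
  assumes f: "f \<in> Linf_Rp" and r: "r \<in> OmegaStar" and hyp: "AE x in lebesgue. f_omega f r x = \<alpha>"
  shows "\<forall>k\<in>L1_Rp. ((\<lambda>s. pair_shift f k s) \<longlongrightarrow> \<alpha> * (LINT x:{0..}|lebesgue. k x)) (omega_filter (flow (- real M) r))"
proof (induct M)
  case 0
  have A0: "AE y in lebesgue. y \<in> {0..} \<longrightarrow> f_omega_Rp f r y = \<alpha>"
    using hyp by eventually_elim (auto simp: f_omega_def)
  show ?case using AE_lim[OF f r A0] flow_0[OF r] by auto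
next
  case (Suc M)
  let ?\<rho> = "flow (- real (Suc M)) r"
  have \<rho>: "?\<rho> \<in> OmegaStar" by (rule flow_OmegaStar[OF r])
  have fl: "flow 1 ?\<rho> = flow (- real M) r" using flow_add[OF r, of 1 "- real (Suc M)"] by simp
  have AN: "AE y in lebesgue. y \<in> {0..<1} \<longrightarrow> f_omega_Rp f ?\<rho> y = \<alpha>"
    using AE_translate[OF hyp, of "- real (Suc M)"]
  proof eventually_elim
    case (elim y)
    show ?case
    proof
      assume y: "y \<in> {0..<1}"
      let ?x = "y + - real (Suc M)"
      have xn: "\<not> 0 \<le> ?x" using y by auto
      have c: "\<lceil>- ?x\<rceil> = int (Suc M)" using y by (simp add: ceiling_eq_iff)
      have "f_omega f r ?x = f_omega_Rp f ?\<rho> y"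
        using xn c by (simp add: f_omega_def Let_def)
      then show "f_omega_Rp f ?\<rho> y = \<alpha>" using elim by simp
    qed
  qed
  show ?case
  proof
    fix k assume k: "k \<in> L1_Rp"
    note dk = decomp_L1[OF k]
    define k0 where "k0 = (\<lambda>x. if x < 1 then k x else 0)"
    define k1 where "k1 = (\<lambda>x. k (x + 1))"
    have k0L: "k0 \<in> L1_Rp" using dk(1) by (simp add: k0_def)
    have k1L: "k1 \<in> L1_Rp" using dk(2) by (simp add: k1_def)
    have s1L: "shr 1 k1 \<in> L1_Rp" by (rule shr_L1[OF _ k1L]) simp
    have keq: "(\<lambda>x. k0 x + shr 1 k1 x) = k" using dk(3) by (simp add: k0_def k1_def)
    have T1: "((\<lambda>s. pair_shift f (shr 1 k1) s) \<longlongrightarrow> \<alpha> * (LINT x:{0..}|lebesgue. k1 x)) (omega_filter ?\<rho>)"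
      using Suc[rule_format, OF k1L] tendsto_flow_shr[OF \<rho>, of 1] fl by simp
    have T0: "((\<lambda>s. pair_shift f k0 s) \<longlongrightarrow> \<alpha> * (LINT x:{0..}|lebesgue. k0 x)) (omega_filter ?\<rho>)"
      by (rule AE_lim[OF f \<rho> AN k0L]) (auto simp: k0_def)
    have T: "((\<lambda>s. pair_shift f k0 s + pair_shift f (shr 1 k1) s) \<longlongrightarrow>
        \<alpha> * (LINT x:{0..}|lebesgue. k0 x) + \<alpha> * (LINT x:{0..}|lebesgue. k1 x)) (omega_filter ?\<rho>)"
      by (rule tendsto_add[OF T0 T1])
    have E: "eventually (\<lambda>s. pair_shift f k0 s + pair_shift f (shr 1 k1) s = pair_shift f k s) (omega_filter ?\<rho>)"
      using omega_filter_props(4)[OF \<rho>]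
    proof eventually_elim
      case (elim s)
      have "pair_shift f k0 s + pair_shift f (shr 1 k1) s = pair_shift f (\<lambda>x. k0 x + shr 1 k1 x) s"
        by (rule pair_shift_add[OF f k0L s1L elim, symmetric])
      then show ?case by (simp only: keq)
    qed
    have I: "\<alpha> * (LINT x:{0..}|lebesgue. k0 x) + \<alpha> * (LINT x:{0..}|lebesgue. k1 x) = \<alpha> * (LINT x:{0..}|lebesgue. k x)"
    proof -
      have "(LINT x:{0..}|lebesgue. k x) = (LINT x:{0..}|lebesgue. k0 x + shr 1 k1 x)" by (simp only: keq)
      also have "\<dots> = (LINT x:{0..}|lebesgue. k0 x) + (LINT x:{0..}|lebesgue. k1 x)"
        using set_int_add[OF k0L s1L] shr_int[of 1 k1] by simp
      finally show ?thesis by (simp add: distrib_left)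
    qed
    show "((\<lambda>s. pair_shift f k s) \<longlongrightarrow> \<alpha> * (LINT x:{0..}|lebesgue. k x)) (omega_filter ?\<rho>)"
      using iffD1[OF tendsto_cong[OF E] T] I by simp
  qed
qed

lemma back_all:
  assumes f: "f \<in> Linf_Rp" and w: "\<omega> \<in> OmegaStar" and r: "r \<in> OmegaStar" and rt: "r = flow t \<omega>"
    and hyp: "AE x in lebesgue. f_omega f r x = \<alpha>"
  shows "\<forall>g\<in>L1_Rp. ((\<lambda>s. pair_shift f g s) \<longlongrightarrow> \<alpha> * (LINT x:{0..}|lebesgue. g x)) (omega_filter \<omega>)"
proof
  fix g assume g: "g \<in> L1_Rp"
  define M where "M = nat \<lceil>t\<rceil>"
  define dd where "dd = real M - t"
  have dd: "0 \<le> dd" unfolding dd_def M_def by linarith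
  let ?\<rho> = "flow (- real M) r"
  have \<rho>: "?\<rho> \<in> OmegaStar" by (rule flow_OmegaStar[OF r])
  have fl: "flow dd ?\<rho> = \<omega>"
  proof -
    have "flow dd ?\<rho> = flow (dd + - real M) r" by (rule flow_add[OF r])
    also have "\<dots> = flow (- t) (flow t \<omega>)" by (simp add: dd_def rt)
    also have "\<dots> = flow 0 \<omega>" by (simp add: flow_add[OF w])
    also have "\<dots> = \<omega>" by (rule flow_0[OF w])
    finally show ?thesis .
  qed
  have "((\<lambda>s. pair_shift f (shr dd g) s) \<longlongrightarrow> \<alpha> * (LINT x:{0..}|lebesgue. shr dd g x)) (omega_filter ?\<rho>)"
    using back_induct[OF f r hyp, of M] shr_L1[OF dd g] by blast
  then have "((\<lambda>s. pair_shift f g s) \<longlongrightarrow> \<alpha> * (LINT x:{0..}|lebesgue. g x)) (omega_filter (flow dd ?\<rho>))"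
    using tendsto_flow_shr[OF \<rho> dd] shr_int[OF dd] by simp
  then show "((\<lambda>s. pair_shift f g s) \<longlongrightarrow> \<alpha> * (LINT x:{0..}|lebesgue. g x)) (omega_filter \<omega>)"
    by (simp add: fl)
qed


lemma PS_cont:
  assumes f: "f \<in> Linf_Rp" and C: "AE x in lebesgue. norm (F0 f x) \<le> C" and g: "integrable lebesgue g"
  shows "norm (PS f g s - PS f g s') \<le> C * (\<integral>y. norm (g (y + (s' - s)) - g y) \<partial>lebesgue)"
proof -
  have e: "PS f g a = (\<integral>x. F0 f x * g (x + - a) \<partial>lebesgue)" for a
  proof -
    have "(\<integral>x. F0 f (x + a) * g (x + a + - a) \<partial>lebesgue) = (\<integral>x. F0 f x * g (x + - a) \<partial>lebesgue)"
      by (rule integral_translate[of "\<lambda>y. F0 f y * g (y + - a)" a])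
    then show ?thesis by (simp add: PS_def)
  qed
  have gt: "integrable lebesgue (\<lambda>x. g (x + - a))" for a using g integrable_translate[of g "- a"] by simp
  have ia: "integrable lebesgue (\<lambda>x. F0 f x * g (x + - a))" for a
    by (rule integrable_bdd_mult[OF gt Linf_meas[OF f] C])
  have "PS f g s - PS f g s' = (\<integral>x. F0 f x * (g (x + - s) - g (x + - s')) \<partial>lebesgue)"
    unfolding e using ia[of s] ia[of s'] by (simp add: right_diff_distrib)
  also have "norm \<dots> \<le> (\<integral>x. norm (F0 f x * (g (x + - s) - g (x + - s'))) \<partial>lebesgue)"
    by (rule integral_norm_bound)
  also have "\<dots> \<le> (\<integral>x. C * norm (g (x + - s) - g (x + - s')) \<partial>lebesgue)"
  proof (rule integral_mono_AE)
    show "integrable lebesgue (\<lambda>x. norm (F0 f x * (g (x + - s) - g (x + - s'))))"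
      using ia[of s] ia[of s'] by (simp add: right_diff_distrib)
    show "integrable lebesgue (\<lambda>x. C * norm (g (x + - s) - g (x + - s')))"
      using gt[of s] gt[of s'] by simp
    show "AE x in lebesgue. norm (F0 f x * (g (x + - s) - g (x + - s'))) \<le> C * norm (g (x + - s) - g (x + - s'))"
      using C by eventually_elim (simp add: norm_mult mult_right_mono)
  qed
  also have "\<dots> = C * (\<integral>x. norm (g (x + - s) - g (x + - s')) \<partial>lebesgue)" by simp
  also have "(\<integral>x. norm (g (x + - s) - g (x + - s')) \<partial>lebesgue) = (\<integral>y. norm (g (y + (s' - s)) - g y) \<partial>lebesgue)"
  proof -
    have "(\<integral>y. norm (g (y + s' + - s) - g (y + s' + - s')) \<partial>lebesgue) = (\<integral>x. norm (g (x + - s) - g (x + - s')) \<partial>lebesgue)"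
      by (rule integral_translate[of "\<lambda>x. norm (g (x + - s) - g (x + - s'))" s'])
    then show ?thesis by (simp add: algebra_simps)
  qed
  finally show ?thesis .
qed

lemma G_unif_cont:
  assumes f: "f \<in> Linf_Rp" and g: "g \<in> L1_Rp" and e: "e > 0"
  obtains \<delta> where "\<delta> > 0"
    "\<And>s s'. 0 \<le> s \<Longrightarrow> 0 \<le> s' \<Longrightarrow> \<bar>s - s'\<bar> < \<delta> \<Longrightarrow> norm (pair_shift f g s - pair_shift f g s') \<le> e"
proof -
  obtain C where C: "C > 0" "AE x in lebesgue. norm (F0 f x) \<le> C" using Linf_bound[OF f] .
  have gi: "integrable lebesgue (F0 g)" using g by (simp add: L1_Rp_iff)
  have "e / C > 0" using e C by simp
  then obtain \<delta> where \<delta>: "\<delta> > 0" "\<forall>t. \<bar>t\<bar> < \<delta> \<longrightarrow> (\<integral>y. norm (F0 g (y + t) - F0 g y) \<partial>lebesgue) \<le> e / C"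
    using L1_translate_cont[OF gi] by blast
  show ?thesis
  proof (rule that[OF \<delta>(1)])
    fix s s' :: real assume s: "0 \<le> s" "0 \<le> s'" "\<bar>s - s'\<bar> < \<delta>"
    have "norm (pair_shift f g s - pair_shift f g s') = norm (PS f (F0 g) s - PS f (F0 g) s')"
      using s by (simp add: pair_shift_PS)
    also have "\<dots> \<le> C * (\<integral>y. norm (F0 g (y + (s' - s)) - F0 g y) \<partial>lebesgue)"
      by (rule PS_cont[OF f C(2) gi])
    also have "\<dots> \<le> C * (e / C)"
      using \<delta>(2) s(3) C(1) by (intro mult_left_mono) auto
    also have "\<dots> = e" using C by simp
    finally show "norm (pair_shift f g s - pair_shift f g s') \<le> e" .
  qed
qed

lemma K_from_all:
  assumes f: "f \<in> Linf_Rp"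
    and all: "\<And>\<omega> g. \<omega> \<in> OmegaStar \<Longrightarrow> g \<in> L1_Rp \<Longrightarrow>
       ((\<lambda>s. pair_shift f g s) \<longlongrightarrow> \<alpha> * (LINT x:{0..}|lebesgue. g x)) (omega_filter \<omega>)"
  shows "K_is f \<alpha>"
  unfolding K_is_def
proof
  fix g assume g: "g \<in> L1_Rp"
  define L where "L = \<alpha> * (LINT x:{0..}|lebesgue. g x)"
  define G where "G = pair_shift f g"
  have "(G \<longlongrightarrow> L) at_top"
  proof (rule ccontr)
    assume nt: "\<not> (G \<longlongrightarrow> L) at_top"
    then obtain \<epsilon> where \<epsilon>: "\<epsilon> > 0" "\<not> eventually (\<lambda>s. dist (G s) L < \<epsilon>) at_top"
      by (auto simp: tendsto_iff)
    have freq: "\<exists>s\<ge>S. \<epsilon> \<le> dist (G s) L" for S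
      using \<epsilon>(2) by (auto simp: eventually_at_top_linorder not_less)
    obtain \<delta> where \<delta>: "\<delta> > 0" and cont: "\<And>s s'. 0 \<le> s \<Longrightarrow> 0 \<le> s' \<Longrightarrow> \<bar>s - s'\<bar> < \<delta> \<Longrightarrow> norm (G s - G s') \<le> \<epsilon> / 2"
      using G_unif_cont[OF f g, of "\<epsilon> / 2"] \<epsilon>(1) unfolding G_def by auto
    obtain n0 where n0: "inverse (real (Suc n0)) < \<delta>" using reals_Archimedean[OF \<delta>] by blast
    define m where "m = Suc n0"
    have m0: "0 < real m" by (simp add: m_def)
    define T where "T j = {n::nat. \<epsilon> / 2 \<le> dist (G (real n + real j / real m)) L}" for j
    have inf: "infinite (\<Union>j<m. T j)"
    proof
      assume fin: "finite (\<Union>j<m. T j)"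
      then obtain B where B: "(\<Union>j<m. T j) \<subseteq> {..<B}" using finite_nat_bounded by blast
      obtain s where s: "real B \<le> s" "\<epsilon> \<le> dist (G s) L" using freq by blast
      have s0: "0 \<le> s" using s(1) by (meson of_nat_0_le_iff order_trans)
      define n where "n = nat \<lfloor>s\<rfloor>"
      have rn: "real n = of_int \<lfloor>s\<rfloor>" using s0 by (simp add: n_def)
      define v where "v = s - real n"
      have v: "0 \<le> v" "v < 1" unfolding v_def rn by (simp_all add: frac_bounds)
      define j where "j = nat \<lfloor>v * real m\<rfloor>"
      have vm0: "0 \<le> v * real m" using v m0 by simp
      have rj: "real j = of_int \<lfloor>v * real m\<rfloor>" using vm0 by (simp add: j_def)
      have j1: "real j \<le> v * real m" unfolding rj by (rule of_int_floor_le)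
      have j2: "v * real m < real j + 1" unfolding rj by (rule real_of_int_floor_add_one_gt)
      have jm: "j < m"
      proof -
        have "v * real m < real m" using v m0 by simp
        then have "real j < real m" using j1 by linarith
        then show ?thesis by simp
      qed
      have u1: "real j / real m \<le> v" using j1 m0 by (simp add: divide_le_eq)
      have u2: "v - real j / real m < 1 / real m"
      proof -
        have "v - real j / real m = (v * real m - real j) / real m" using m0 by (simp add: field_simps)
        also have "\<dots> < 1 / real m" using j2 m0 by (intro divide_strict_right_mono) auto
        finally show ?thesis .
      qed
      let ?u = "real n + real j / real m"
      have u0: "0 \<le> ?u" using m0 by simp
      have close: "\<bar>s - ?u\<bar> < \<delta>"
      proof -
        have "\<bar>s - ?u\<bar> = v - real j / real m" using u1 by (simp add: v_def)
        also have "\<dots> < 1 / real m" by (rule u2)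
        also have "\<dots> < \<delta>" using n0 by (simp add: m_def inverse_eq_divide)
        finally show ?thesis .
      qed
      have "dist (G s) L \<le> dist (G s) (G ?u) + dist (G ?u) L" by (rule dist_triangle)
      also have "dist (G s) (G ?u) \<le> \<epsilon> / 2" using cont[OF s0 u0 close] by (simp add: dist_norm)
      finally have "\<epsilon> / 2 \<le> dist (G ?u) L" using s(2) by simp
      then have "n \<in> T j" by (simp add: T_def)
      then have "n < B" using B jm by blast
      moreover have "B \<le> n" using s(1) unfolding n_def by linarith
      ultimately show False by simp
    qed
    then obtain j where j: "j < m" "infinite (T j)" by auto
    obtain \<eta> where \<eta>: "\<eta> \<in> Nstar" "eventually (\<lambda>n. n \<in> T j) \<eta>"
      using ex_free_ultra[OF j(2)] by blast
    define \<omega> where "\<omega> = (\<eta>, real j / real m)"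
    have w: "\<omega> \<in> OmegaStar" using \<eta>(1) j m0 by (simp add: \<omega>_def OmegaStar_def)
    have "(G \<longlongrightarrow> L) (omega_filter \<omega>)" using all[OF w g] by (simp add: G_def L_def)
    then have "eventually (\<lambda>s. dist (G s) L < \<epsilon> / 2) (omega_filter \<omega>)"
      using \<epsilon>(1) by (intro tendstoD) auto
    then have "eventually (\<lambda>n. dist (G (real j / real m + real n)) L < \<epsilon> / 2) \<eta>"
      by (simp add: \<omega>_def omega_filter_def eventually_filtermap)
    with \<eta>(2) have "eventually (\<lambda>n. False) \<eta>"
      by eventually_elim (simp add: T_def add.commute)
    moreover have "\<eta> \<noteq> bot" using \<eta>(1) by (simp add: Nstar_def ultra_def)
    ultimately show False by (simp add: trivial_limit_def)
  qed
  then show "((\<lambda>s. pair_shift f g s) \<longlongrightarrow> \<alpha> * (LINT x:{0..}|lebesgue. g x)) at_top"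
    by (simp add: G_def L_def)
qed

theorem lemma2p3:
  fixes f :: "real \<Rightarrow> complex" and \<alpha> :: complex
    and Reps :: "(nat filter \<times> real) set"
  assumes "f \<in> Linf_Rp"
    and "orbit_reps Reps"
  shows "K_is f \<alpha> \<longleftrightarrow> (\<forall>\<omega> \<in> Reps. AE x in lebesgue. f_omega f \<omega> x = \<alpha>)"
proof
  assume K: "K_is f \<alpha>"
  show "\<forall>\<omega> \<in> Reps. AE x in lebesgue. f_omega f \<omega> x = \<alpha>"
  proof
    fix \<omega> assume "\<omega> \<in> Reps"
    then have "\<omega> \<in> OmegaStar" using assms(2) by (auto simp: orbit_reps_def)
    then show "AE x in lebesgue. f_omega f \<omega> x = \<alpha>" by (rule forward[OF assms(1) K])
  qed
next
  assume H: "\<forall>\<omega> \<in> Reps. AE x in lebesgue. f_omega f \<omega> x = \<alpha>"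
  show "K_is f \<alpha>"
  proof (rule K_from_all[OF assms(1)])
    fix \<omega> g assume w: "\<omega> \<in> OmegaStar" and g: "g \<in> L1_Rp"
    obtain r where r: "r \<in> Reps" "r \<in> orbit \<omega>" using assms(2) w by (auto simp: orbit_reps_def)
    have rO: "r \<in> OmegaStar" using r(1) assms(2) by (auto simp: orbit_reps_def)
    obtain t where t: "r = flow t \<omega>" using r(2) by (auto simp: orbit_def)
    show "((\<lambda>s. pair_shift f g s) \<longlongrightarrow> \<alpha> * (LINT x:{0..}|lebesgue. g x)) (omega_filter \<omega>)"
      using back_all[OF assms(1) w rO t H[rule_format, OF r(1)]] g by blast
  qed
qed


end
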